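(* Let ${\bf r}=(r_0,r_1,\dots)$ be a finitely supported sequence of nonnegative integers with $n=\sum_{d\ge1}r_d\ge1$ and $\ell=-\sum_{d\ge0}(d-1)r_d\ge1$, let $k\ge0$ be an integer, and let ${\bf S}\in V_{\bf r}$. Let $\mathcal{CF}_{{\bf r},k,{\bf S},1}$ be the set of forests in $\mathcal{CF}_{{\bf r},k,{\bf S}}$ in which the internal vertex with label $1$ lies in the first tree. Then $$|\mathcal{CF}_{{\bf r},k,{\bf S},1}|=1^{r_1}2^{r_2}3^{r_3}\cdots\prod_{i=1}^{n-1}\big(r_0+i(1+k)\big).$$
   Context: A plane tree is an unlabelled rooted tree in which the children of every vertex are linearly ordered; a plane forest is a finite linearly ordered sequence of plane trees (so it has a first tree). For vertices $u,v$ in a tree, $v$ is a descendant of $u$ if $u$ lies on the path from the root to $v$ (so $u$ is a descendant of itself). The degree $d_v$ is the number of children of $v$; $v$ is internal if $d_v\ge1$. $I(F)$ is the set of internal vertices of $F$. A plane forest has type ${\bf r}$ if it has exactly $r_i$ vertices of degree $i$ for all $i\ge0$. A labelled forest is a plane forest $F$ together with a bijection (labelling) $I(F)\to[n]$. An internal vertex $v$ of a labelled forest is proper if no internal descendant of $v$ has a smaller label than $v$, and improper otherwise. Fix colors $c_1,c_2,\dots$ and distinct special colors $c_1',c_2',\dots$. A proper $k$-coloring of a labelled forest assigns to each internal vertex $v$ a color, taken from $\{c_1,\dots,c_{d_v}\}$ if $v$ is proper and from $\{c_1,\dots,c_{d_v}\}\cup\{c_1',\dots,c_k'\}$ if $v$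 is improper. A $k$-colored labelled forest is a labelled forest together with a proper $k$-coloring; $\mathcal{CF}_{{\bf r},k}$ is the set of $k$-colored labelled forests whose underlying plane forest has type ${\bf r}$. $V_{\bf r}$ is the set of sequences ${\bf S}=(S_1,S_2,\dots)$ of pairwise disjoint subsets of $[n]$ with union $[n]$ and $|S_i|=r_i$ for all $i\ge1$. For ${\bf S}\in V_{\bf r}$, $\mathcal{CF}_{{\bf r},k,{\bf S}}$ is the set of forests in $\mathcal{CF}_{{\bf r},k}$ in which every internal vertex $v$ has its label in $S_{d_v}$. *)

theory Defs
  imports Main "HOL-Library.Sublist"
begin

text \<open>Plane trees: a vertex together with the linearly ordered list of its subtrees.
A plane forest is a list of plane trees.\<close>
datatype ptree = Node "ptree list"

fun kids :: "ptree \<Rightarrow> ptree list" where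
  "kids (Node cs) = cs"

text \<open>Vertices are addressed by paths: the subtree reached from a tree by a list of
child indices.\<close>
fun subtree :: "ptree \<Rightarrow> nat list \<Rightarrow> ptree option" where
  "subtree t [] = Some t"
| "subtree (Node cs) (i # p) = (if i < length cs then subtree (cs ! i) p else None)"

text \<open>In a forest a vertex is addressed by (index of its tree) # (path inside that tree).\<close>
fun fsub :: "ptree list \<Rightarrow> nat list \<Rightarrow> ptree option" where
  "fsub F [] = None"
| "fsub F (i # p) = (if i < length F then subtree (F ! i) p else None)"

definition verts :: "ptree list \<Rightarrow> nat list set" where
  "verts F = {v. fsub F v \<noteq> None}"

definition deg :: "ptree list \<Rightarrow> nat list \<Rightarrow> nat" where
  "deg F v = (case fsub F v of Some t \<Rightarrow> length (kids t) | None \<Rightarrow> 0)"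

definition internal :: "ptree list \<Rightarrow> nat list set" where
  "internal F = {v \<in> verts F. 1 \<le> deg F v}"

definition descendant :: "nat list \<Rightarrow> nat list \<Rightarrow> bool" where
  "descendant v u \<longleftrightarrow> prefix u v"

definition has_type :: "ptree list \<Rightarrow> (nat \<Rightarrow> nat) \<Rightarrow> bool" where
  "has_type F r \<longleftrightarrow> (\<forall>i. card {v \<in> verts F. deg F v = i} = r i)"

definition labelling :: "ptree list \<Rightarrow> nat \<Rightarrow> (nat list \<Rightarrow> nat) \<Rightarrow> bool" where
  "labelling F n L \<longleftrightarrow> bij_betw L (internal F) {1..n} \<and> (\<forall>v. v \<notin> internal F \<longrightarrow> L v = 0)"

definition proper_vertex :: "ptree list \<Rightarrow> (nat list \<Rightarrow> nat) \<Rightarrow> nat list \<Rightarrow> bool" where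
  "proper_vertex F L v \<longleftrightarrow> (\<forall>w \<in> internal F. descendant w v \<longrightarrow> L v \<le> L w)"

text \<open>Colours c_j (Col j) and special colours c'_j (Col' j).\<close>
datatype colour = Col nat | Col' nat

definition proper_colouring ::
  "ptree list \<Rightarrow> (nat list \<Rightarrow> nat) \<Rightarrow> nat \<Rightarrow> (nat list \<Rightarrow> colour) \<Rightarrow> bool" where
  "proper_colouring F L k c \<longleftrightarrow>
     (\<forall>v \<in> internal F.
        (proper_vertex F L v \<longrightarrow> c v \<in> Col ` {1..deg F v}) \<and>
        (\<not> proper_vertex F L v \<longrightarrow> c v \<in> Col ` {1..deg F v} \<union> Col' ` {1..k}))
     \<and> (\<forall>v. v \<notin> internal F \<longrightarrow> c v = Col 0)"

definition nint :: "(nat \<Rightarrow> nat) \<Rightarrow> nat" where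
  "nint r = (\<Sum>d \<in> {d. 1 \<le> d \<and> r d \<noteq> 0}. r d)"

definition CF :: "(nat \<Rightarrow> nat) \<Rightarrow> nat \<Rightarrow>
    (ptree list \<times> (nat list \<Rightarrow> nat) \<times> (nat list \<Rightarrow> colour)) set" where
  "CF r k = {(F, L, c). has_type F r \<and> labelling F (nint r) L \<and> proper_colouring F L k c}"

text \<open>V_r: sequences (S_1, S_2, ...) represented as S :: nat \<Rightarrow> nat set with S 0 = {}.\<close>
definition V :: "(nat \<Rightarrow> nat) \<Rightarrow> (nat \<Rightarrow> nat set) set" where
  "V r = {S. S 0 = {} \<and> (\<forall>i j. 1 \<le> i \<longrightarrow> 1 \<le> j \<longrightarrow> i \<noteq> j \<longrightarrow> S i \<inter> S j = {})
            \<and> (\<Union>i \<in> {i. 1 \<le> i}. S i) = {1..nint r}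
            \<and> (\<forall>i. 1 \<le> i \<longrightarrow> card (S i) = r i)}"

definition CFS :: "(nat \<Rightarrow> nat) \<Rightarrow> nat \<Rightarrow> (nat \<Rightarrow> nat set) \<Rightarrow>
    (ptree list \<times> (nat list \<Rightarrow> nat) \<times> (nat list \<Rightarrow> colour)) set" where
  "CFS r k S = {(F, L, c) \<in> CF r k. \<forall>v \<in> internal F. L v \<in> S (deg F v)}"

definition CFS1 :: "(nat \<Rightarrow> nat) \<Rightarrow> nat \<Rightarrow> (nat \<Rightarrow> nat set) \<Rightarrow>
    (ptree list \<times> (nat list \<Rightarrow> nat) \<times> (nat list \<Rightarrow> colour)) set" where
  "CFS1 r k S = {(F, L, c) \<in> CFS r k S. \<forall>v \<in> internal F. L v = 1 \<longrightarrow> hd v = 0}"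

end

theory Submission
  imports Defs
begin


fun nn :: "ptree \<Rightarrow> nat" where "nn (Node cs) = Suc (sum_list (map nn cs))"
definition fsz :: "ptree list \<Rightarrow> nat" where "fsz F = sum_list (map nn F)"

fun phi :: "nat \<Rightarrow> nat list \<Rightarrow> nat list" where
  "phi m [] = []"
| "phi m (i # p) = (if i < m then 0 # i # p else Suc (i - m) # p)"

fun psi :: "nat \<Rightarrow> nat list \<Rightarrow> nat list" where
  "psi m [] = []"
| "psi m [0] = []"
| "psi m (0 # i # p) = i # p"
| "psi m (Suc j # p) = (j + m) # p"

lemma psi_phi[simp]: "psi m (phi m v) = v"
  by (cases v) auto

lemma inj_phi: "inj (phi m)"
  by (metis injI psi_phi)

lemma phi_ne0[simp]: "phi m v \<noteq> [0]" "[0] \<noteq> phi m v"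
  by (cases v; auto)+

lemma phi_Nil_iff[simp]: "(phi m v = []) = (v = [])"
  by (cases v) auto

lemma fsub_Nil[simp]: "fsub F [] = None"
  by simp

lemma fsub_phi:
  "fsub (Node cs # rest) (phi (length cs) v) = fsub (cs @ rest) v"
  by (cases v) (auto simp: nth_append)

lemma fsub_0: "fsub (Node cs # rest) [0] = Some (Node cs)"
  by simp

lemma fsub_cases:
  assumes "fsub (Node cs # rest) w \<noteq> None"
  shows "w = [0] \<or> (\<exists>v. w = phi (length cs) v \<and> v \<noteq> [])"
proof -
  obtain j p where w: "w = j # p" using assms by (cases w) auto
  show ?thesis
  proof (cases j)
    case 0
    show ?thesis
    proof (cases p)
      case Nil then show ?thesis using w 0 by simp
    next
      case (Cons i q)
      then have "i < length cs" using assms w 0 by (auto split: if_splits)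
      then have "w = phi (length cs) (i # q)" using w 0 Cons by simp
      then show ?thesis by blast
    qed
  next
    case (Suc j')
    have "w = phi (length cs) ((j' + length cs) # p)" using w Suc by simp
    then show ?thesis by blast
  qed
qed

lemma verts_pop:
  "verts (Node cs # rest) = insert [0] (phi (length cs) ` verts (cs @ rest))"
proof -
  have "w \<in> verts (Node cs # rest) \<longleftrightarrow> w \<in> insert [0] (phi (length cs) ` verts (cs @ rest))" for w
  proof
    assume "w \<in> verts (Node cs # rest)"
    then show "w \<in> insert [0] (phi (length cs) ` verts (cs @ rest))"
      using fsub_cases[of cs rest w] fsub_phi[of cs rest] unfolding verts_def by fastforce
  next
    assume "w \<in> insert [0] (phi (length cs) ` verts (cs @ rest))"
    then show "w \<in> verts (Node cs # rest)"
      using fsub_phi[of cs rest] unfolding verts_def by auto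
  qed
  then show ?thesis by blast
qed

lemma deg_phi: "deg (Node cs # rest) (phi (length cs) v) = deg (cs @ rest) v"
  unfolding deg_def by (simp add: fsub_phi)

lemma deg_0: "deg (Node cs # rest) [0] = length cs"
  unfolding deg_def by simp

lemma Nil_notin_verts[simp]: "[] \<notin> verts F"
  unfolding verts_def by simp

lemma internal_pop:
  assumes "cs \<noteq> []"
  shows "internal (Node cs # rest) = insert [0] (phi (length cs) ` internal (cs @ rest))"
  using assms unfolding internal_def
  by (auto simp: verts_pop deg_phi deg_0 Suc_le_eq)

lemma finite_verts_fsz:
  "finite (verts F) \<and> card (verts F) = fsz F \<and> (\<Sum>v\<in>verts F. deg F v) + length F = fsz F"
proof (induction "fsz F" arbitrary: F rule: less_induct)
  case less
  show ?case
  proof (cases F)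
    case Nil
    have "fsub [] v = None" for v by (cases v) auto
    then have "verts [] = {}" unfolding verts_def by simp
    then show ?thesis using Nil by (simp add: fsz_def)
  next
    case (Cons T rest)
    obtain cs where T: "T = Node cs" by (cases T)
    let ?F' = "cs @ rest"
    have sz: "fsz F = Suc (fsz ?F')" using Cons T by (simp add: fsz_def)
    then have IH: "finite (verts ?F') \<and> card (verts ?F') = fsz ?F' \<and> (\<Sum>v\<in>verts ?F'. deg ?F' v) + length ?F' = fsz ?F'"
      using less[of ?F'] sz by simp
    have V: "verts F = insert [0] (phi (length cs) ` verts ?F')" using Cons T verts_pop by simp
    have nin: "[0] \<notin> phi (length cs) ` verts ?F'" by (metis imageE phi_ne0)
    have inj: "inj_on (phi (length cs)) (verts ?F')" using inj_phi by (metis inj_on_subset subset_UNIV)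
    have fin: "finite (verts F)" using V IH by simp
    have c: "card (verts F) = fsz F" using V IH nin inj sz by (simp add: card_image)
    have "(\<Sum>v\<in>verts F. deg F v) = deg F [0] + (\<Sum>v\<in>phi (length cs) ` verts ?F'. deg F v)"
      using V nin IH by simp
    also have "(\<Sum>v\<in>phi (length cs) ` verts ?F'. deg F v) = (\<Sum>v\<in>verts ?F'. deg ?F' v)"
      using inj by (simp add: sum.reindex Cons T deg_phi)
    finally have "(\<Sum>v\<in>verts F. deg F v) = length cs + (\<Sum>v\<in>verts ?F'. deg ?F' v)"
      using Cons T deg_0 by simp
    then have "(\<Sum>v\<in>verts F. deg F v) + length F = fsz F" using IH sz Cons by simp
    then show ?thesis using fin c by simp
  qed
qed



lemma prefix_phi: "prefix (phi m u) (phi m v) \<longleftrightarrow> prefix u v"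
proof (cases u)
  case Nil then show ?thesis by simp
next
  case (Cons i p)
  show ?thesis
  proof (cases v)
    case Nil then show ?thesis using Cons by auto
  next
    case (Cons j q)
    then show ?thesis using \<open>u = i # p\<close> by auto
  qed
qed

lemma prefix0_phi: "prefix [0] (phi m u) \<longleftrightarrow> (u \<noteq> [] \<and> hd u < m)"
  by (cases u) auto

lemma not_prefix_phi0: "u \<noteq> [] \<Longrightarrow> \<not> prefix (phi m u) [0]"
  by (cases u) auto

lemma internal_nonempty: "v \<in> internal F \<Longrightarrow> v \<noteq> []"
  unfolding internal_def by auto

definition allowed :: "ptree list \<Rightarrow> (nat list \<Rightarrow> nat) \<Rightarrow> nat \<Rightarrow> nat list \<Rightarrow> colour set" where
  "allowed F L k v = (if proper_vertex F L v then Col ` {1..deg F v} else Col ` {1..deg F v} \<union> Col' ` {1..k})"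

lemma pc_alt: "proper_colouring F L k c \<longleftrightarrow>
   (\<forall>v\<in>internal F. c v \<in> allowed F L k v) \<and> (\<forall>v. v \<notin> internal F \<longrightarrow> c v = Col 0)"
  unfolding proper_colouring_def allowed_def by auto

definition XX :: "nat set \<Rightarrow> (nat \<Rightarrow> nat) \<Rightarrow> nat \<Rightarrow> nat \<Rightarrow>
    (ptree list \<times> (nat list \<Rightarrow> nat) \<times> (nat list \<Rightarrow> colour)) set" where
  "XX \<Lambda> D r0 k = {(F, L, c). card {v \<in> verts F. deg F v = 0} = r0 \<and> bij_betw L (internal F) \<Lambda>
      \<and> (\<forall>v. v \<notin> internal F \<longrightarrow> L v = 0) \<and> (\<forall>v \<in> internal F. deg F v = D (L v))
      \<and> proper_colouring F L k c}"

context
  fixes cs rest F F' m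
  assumes F: "F = Node cs # rest" and F': "F' = cs @ rest" and m: "m = length cs" and ne: "cs \<noteq> []"
begin

lemma int_F: "internal F = insert [0] (phi m ` internal F')"
  using internal_pop[OF ne] F F' m by simp

lemma nin0: "[0] \<notin> phi m ` A"
  by (metis imageE phi_ne0(1))

lemma injA: "inj_on (phi m) A"
  using inj_phi by (metis inj_on_subset subset_UNIV)

lemma leaves_F: "card {v \<in> verts F. deg F v = 0} = card {v \<in> verts F'. deg F' v = 0}"
proof -
  have "{v \<in> verts F. deg F v = 0} = phi m ` {v \<in> verts F'. deg F' v = 0}"
    using ne F F' m by (auto simp: verts_pop deg_phi deg_0)
  then show ?thesis using injA by (simp add: card_image)
qed

lemma bij_F: "bij_betw L (internal F) \<Lambda> \<longleftrightarrow> L [0] \<in> \<Lambda> \<and> bij_betw (L \<circ> phi m) (internal F') (\<Lambda> - {L [0]})"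
proof -
  have e: "inj_on (L \<circ> phi m) (internal F') \<longleftrightarrow> inj_on L (phi m ` internal F')"
    using comp_inj_on_iff[OF injA] by blast
  have im: "(L \<circ> phi m) ` internal F' = L ` (phi m ` internal F')" by (simp add: image_comp)
  show ?thesis
    unfolding bij_betw_def int_F using nin0[of "internal F'"] e im
    by (auto simp: inj_on_insert) (metis image_eqI)
qed

lemma zeroX_F:
  fixes L :: "nat list \<Rightarrow> 'a"
  shows "(\<forall>v. v \<notin> internal F \<longrightarrow> L v = z) \<longleftrightarrow>
   (\<forall>v. v \<notin> internal F' \<longrightarrow> (L \<circ> phi m) v = z) \<and> (\<forall>w. w \<notin> range (phi m) \<and> w \<noteq> [0] \<longrightarrow> L w = z)"
proof
  assume A: "\<forall>v. v \<notin> internal F \<longrightarrow> L v = z"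
  have "phi m v \<notin> internal F" if "v \<notin> internal F'" for v
    using that unfolding int_F using inj_phi by (auto simp: inj_eq)
  moreover have "w \<notin> internal F" if "w \<notin> range (phi m)" "w \<noteq> [0]" for w
    using that unfolding int_F by auto
  ultimately show "(\<forall>v. v \<notin> internal F' \<longrightarrow> (L \<circ> phi m) v = z) \<and> (\<forall>w. w \<notin> range (phi m) \<and> w \<noteq> [0] \<longrightarrow> L w = z)"
    using A by auto
next
  assume B: "(\<forall>v. v \<notin> internal F' \<longrightarrow> (L \<circ> phi m) v = z) \<and> (\<forall>w. w \<notin> range (phi m) \<and> w \<noteq> [0] \<longrightarrow> L w = z)"
  show "\<forall>v. v \<notin> internal F \<longrightarrow> L v = z"
  proof (intro allI impI)
    fix v assume v: "v \<notin> internal F"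
    show "L v = z"
    proof (cases "v \<in> range (phi m)")
      case True
      then obtain u where u: "v = phi m u" by auto
      then have "u \<notin> internal F'" using v unfolding int_F by auto
      then show ?thesis using B u by auto
    next
      case False
      have "v \<noteq> [0]" using v unfolding int_F by auto
      then show ?thesis using B False by auto
    qed
  qed
qed

lemmas zeroL_F = zeroX_F[where z = 0] 
lemmas zeroc_F = zeroX_F[where z = "Col 0"] 

lemma deg_F_phi: "deg F (phi m v) = deg F' v"
  using deg_phi F F' m by simp

lemma deg_F_0: "deg F [0] = m"
  using deg_0 F m by simp

lemma degc_F: "(\<forall>v \<in> internal F. deg F v = D (L v)) \<longleftrightarrow>
   D (L [0]) = m \<and> (\<forall>v \<in> internal F'. deg F' v = D ((L \<circ> phi m) v))"
  unfolding int_F by (auto simp: deg_F_phi deg_F_0)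

lemma pv_F_phi: "v \<noteq> [] \<Longrightarrow> proper_vertex F L (phi m v) \<longleftrightarrow> proper_vertex F' (L \<circ> phi m) v"
  unfolding proper_vertex_def descendant_def int_F
  by (auto simp: prefix_phi not_prefix_phi0)

lemma pv_F_0: "proper_vertex F L [0] \<longleftrightarrow> (\<forall>u\<in>internal F'. hd u < m \<longrightarrow> L [0] \<le> L (phi m u))"
  unfolding proper_vertex_def descendant_def int_F
  by (auto simp: prefix0_phi dest: internal_nonempty)

lemma allowed_F_phi: "v \<noteq> [] \<Longrightarrow> allowed F L k (phi m v) = allowed F' (L \<circ> phi m) k v"
  unfolding allowed_def using pv_F_phi deg_F_phi by simp

lemma pc_F: "proper_colouring F L k c \<longleftrightarrow>
   c [0] \<in> allowed F L k [0] \<and> proper_colouring F' (L \<circ> phi m) k (c \<circ> phi m)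
   \<and> (\<forall>w. w \<notin> range (phi m) \<and> w \<noteq> [0] \<longrightarrow> c w = Col 0)"
proof -
  have a: "(\<forall>v\<in>internal F. c v \<in> allowed F L k v) \<longleftrightarrow>
     c [0] \<in> allowed F L k [0] \<and> (\<forall>v\<in>internal F'. (c \<circ> phi m) v \<in> allowed F' (L \<circ> phi m) k v)"
  proof -
    have e: "\<forall>v\<in>internal F'. allowed F L k (phi m v) = allowed F' (L \<circ> phi m) k v"
      using allowed_F_phi internal_nonempty by blast
    show ?thesis unfolding int_F using e by auto
  qed
  show ?thesis unfolding pc_alt a zeroc_F by auto
qed

lemma XX_F: "(F, L, c) \<in> XX \<Lambda> D r0 k \<longleftrightarrow>
   L [0] \<in> \<Lambda> \<and> D (L [0]) = m \<and> (F', L \<circ> phi m, c \<circ> phi m) \<in> XX (\<Lambda> - {L [0]}) D r0 k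
   \<and> c [0] \<in> allowed F L k [0] \<and> (\<forall>w. w \<notin> range (phi m) \<and> w \<noteq> [0] \<longrightarrow> L w = 0 \<and> c w = Col 0)"
proof -
  have x: "(G, L, c) \<in> XX \<Lambda> D r0 k \<longleftrightarrow> card {v \<in> verts G. deg G v = 0} = r0 \<and> bij_betw L (internal G) \<Lambda>
      \<and> (\<forall>v. v \<notin> internal G \<longrightarrow> L v = 0) \<and> (\<forall>v \<in> internal G. deg G v = D (L v))
      \<and> proper_colouring G L k c" for G L c \<Lambda> by (simp add: XX_def)
  show ?thesis unfolding x leaves_F bij_F zeroL_F degc_F pc_F
    by (simp only: imp_conjR all_conj_distrib) (intro iffI; elim conjE; intro conjI; assumption)
qed

end



lemma hd_verts: "v \<in> verts F \<Longrightarrow> v \<noteq> [] \<and> hd v < length F"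
  unfolding verts_def by (cases v) (auto split: if_splits)

lemma XX_length:
  assumes "(F, L, c) \<in> XX \<Lambda> D r0 k" "finite \<Lambda>"
  shows "length F + (\<Sum>x\<in>\<Lambda>. D x) = r0 + card \<Lambda>"
proof -
  have A: "finite (verts F)" "card (verts F) = fsz F" "(\<Sum>v\<in>verts F. deg F v) + length F = fsz F"
    using finite_verts_fsz by auto
  have r0: "card {v \<in> verts F. deg F v = 0} = r0" and bij: "bij_betw L (internal F) \<Lambda>"
    and dg: "\<forall>v \<in> internal F. deg F v = D (L v)"
    using assms unfolding XX_def by auto
  have U: "verts F = {v \<in> verts F. deg F v = 0} \<union> internal F" unfolding internal_def by auto
  have dj: "{v \<in> verts F. deg F v = 0} \<inter> internal F = {}" unfolding internal_def by auto
  have fi: "finite (internal F)" "finite {v \<in> verts F. deg F v = 0}" using A(1) U by (metis finite_Un)+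
  have c1: "card (verts F) = r0 + card \<Lambda>"
    using card_Un_disjoint[OF fi(2) fi(1) dj] U r0 bij_betw_same_card[OF bij] by simp
  have s0: "(\<Sum>v\<in>{v \<in> verts F. deg F v = 0}. deg F v) = 0" by simp
  have "sum (deg F) ({v \<in> verts F. deg F v = 0} \<union> internal F) = sum (deg F) {v \<in> verts F. deg F v = 0} + sum (deg F) (internal F)"
    by (rule sum.union_disjoint[OF fi(2) fi(1) dj])
  then have "(\<Sum>v\<in>verts F. deg F v) = (\<Sum>v\<in>internal F. deg F v)"
    using s0 unfolding U[symmetric] by simp
  also have "\<dots> = (\<Sum>v\<in>internal F. D (L v))" using dg by simp
  also have "\<dots> = (\<Sum>x\<in>\<Lambda>. D x)" using sum.reindex_bij_betw[OF bij, of D] by simp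
  finally show ?thesis using A c1 by simp
qed

lemma XX_bij: "(F, L, c) \<in> XX \<Lambda> D r0 k \<Longrightarrow> bij_betw L (internal F) \<Lambda>"
  by (simp add: XX_def)

definition QS :: "nat set \<Rightarrow> (nat \<Rightarrow> nat) \<Rightarrow> nat \<Rightarrow> nat \<Rightarrow> (nat \<Rightarrow> bool) \<Rightarrow>
    (ptree list \<times> (nat list \<Rightarrow> nat) \<times> (nat list \<Rightarrow> colour)) set" where
  "QS \<Lambda> D r0 k P = {(F, L, c) \<in> XX \<Lambda> D r0 k. \<forall>v \<in> internal F. L v = Min \<Lambda> \<longrightarrow> P (hd v)}"

definition detach :: "ptree list \<times> (nat list \<Rightarrow> nat) \<times> (nat list \<Rightarrow> colour) \<Rightarrow>
    nat \<times> colour \<times> ptree list \<times> (nat list \<Rightarrow> nat) \<times> (nat list \<Rightarrow> colour)" where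
  "detach = (\<lambda>(F, L, c). (L [0], c [0], kids (hd F) @ tl F,
       L \<circ> phi (length (kids (hd F))), c \<circ> phi (length (kids (hd F)))))"

definition attach :: "(nat \<Rightarrow> nat) \<Rightarrow> nat \<times> colour \<times> ptree list \<times> (nat list \<Rightarrow> nat) \<times> (nat list \<Rightarrow> colour)
    \<Rightarrow> ptree list \<times> (nat list \<Rightarrow> nat) \<times> (nat list \<Rightarrow> colour)" where
  "attach D = (\<lambda>(a, g, F', L', c'). (Node (take (D a) F') # drop (D a) F',
       \<lambda>w. if w = [0] then a else if w \<in> range (phi (D a)) then L' (psi (D a) w) else 0,
       \<lambda>w. if w = [0] then g else if w \<in> range (phi (D a)) then c' (psi (D a) w) else Col 0))"

definition colset :: "nat set \<Rightarrow> (nat \<Rightarrow> nat) \<Rightarrow> nat \<Rightarrow> nat \<Rightarrow> colour set" where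
  "colset \<Lambda> D k a = (if a = Min \<Lambda> then Col ` {1..D a} else Col ` {1..D a} \<union> Col' ` {1..k})"

definition YS :: "nat set \<Rightarrow> (nat \<Rightarrow> nat) \<Rightarrow> nat \<Rightarrow> nat \<Rightarrow> nat \<Rightarrow>
    (ptree list \<times> (nat list \<Rightarrow> nat) \<times> (nat list \<Rightarrow> colour)) set" where
  "YS \<Lambda> D r0 k a = (if a = Min \<Lambda> then XX (\<Lambda> - {a}) D r0 k else QS (\<Lambda> - {a}) D r0 k (\<lambda>i. i < D a))"

lemma Min_remove: "finite \<Lambda> \<Longrightarrow> a \<in> \<Lambda> \<Longrightarrow> a \<noteq> Min \<Lambda> \<Longrightarrow> Min (\<Lambda> - {a}) = Min \<Lambda>"
  by (metis Diff_iff Min_eqI Min_in Min_le empty_iff finite_Diff singletonD)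

context
  fixes cs rest F F' m
  assumes F: "F = Node cs # rest" and F': "F' = cs @ rest" and m: "m = length cs" and ne: "cs \<noteq> []"
begin

lemma XX_F1:
  assumes "(F, L, c) \<in> XX \<Lambda> D r0 k"
  shows "L [0] \<in> \<Lambda>" "D (L [0]) = m" "(F', L \<circ> phi m, c \<circ> phi m) \<in> XX (\<Lambda> - {L [0]}) D r0 k"
   "c [0] \<in> allowed F L k [0]" "\<And>w. w \<notin> range (phi m) \<Longrightarrow> w \<noteq> [0] \<Longrightarrow> L w = 0 \<and> c w = Col 0"
  using XX_F[OF F F' m ne, of L c \<Lambda> D r0 k] assms by blast+

lemma root_proper1:
  assumes "(F', L \<circ> phi m, c') \<in> XX (\<Lambda> - {L [0]}) D r0 k" "finite \<Lambda>" "L [0] = Min \<Lambda>"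
  shows "proper_vertex F L [0]"
  unfolding pv_F_0[OF F F' m ne]
proof (intro ballI impI)
  fix u assume u: "u \<in> internal F'" "hd u < m"
  have "L (phi m u) \<in> \<Lambda> - {L [0]}" using XX_bij[OF assms(1)] u unfolding bij_betw_def by auto
  then show "L [0] \<le> L (phi m u)" using assms(2,3) by simp
qed

lemma root_improper:
  assumes "L [0] \<in> \<Lambda>" "finite \<Lambda>" "L [0] \<noteq> Min \<Lambda>"
    "u \<in> internal F'" "L (phi m u) = Min \<Lambda>" "hd u < m"
  shows "\<not> proper_vertex F L [0]"
proof
  assume p: "proper_vertex F L [0]"
  have "L [0] \<le> Min \<Lambda>" using p assms(4-6) pv_F_0[OF F F' m ne] by auto
  moreover have "Min \<Lambda> \<le> L [0]" using assms(1,2) by simp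
  ultimately show False using assms(3) by simp
qed

lemma allowed_0: "allowed F L k [0] = (if proper_vertex F L [0] then Col ` {1..m} else Col ` {1..m} \<union> Col' ` {1..k})"
  using deg_0[of cs rest] F m unfolding allowed_def by simp

end



lemma hd_phi: "u \<noteq> [] \<Longrightarrow> hd (phi m u) = 0 \<longleftrightarrow> hd u < m"
  by (cases u) auto

lemma first_root:
  assumes "v \<in> internal F" "hd v = 0"
  shows "\<exists>cs rest. F = Node cs # rest \<and> cs \<noteq> []"
proof -
  have v: "v \<in> verts F" "1 \<le> deg F v" using assms unfolding internal_def by auto
  then obtain p where p: "v = 0 # p" using hd_verts[of v F] assms(2) by (cases v) auto
  obtain T rest where Fr: "F = T # rest" using hd_verts[OF v(1)] by (cases F) auto
  obtain cs where T: "T = Node cs" by (cases T)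
  have "cs \<noteq> []"
  proof
    assume "cs = []"
    then have "fsub F v = (case p of [] \<Rightarrow> Some (Node []) | _ \<Rightarrow> None)" using Fr T p by (cases p) auto
    then show False using v unfolding verts_def deg_def by (cases p) auto
  qed
  then show ?thesis using Fr T by blast
qed

lemma sum_remove_nat: "finite A \<Longrightarrow> a \<in> A \<Longrightarrow> (\<Sum>x\<in>A. f x) = f a + (\<Sum>x\<in>A - {a}. (f x :: nat))"
  by (simp add: sum.remove)

lemma attach_props:
  assumes "1 \<le> D a" "D a \<le> length F'" "attach D (a, g, F', L', c') = (F, L, c)"
  shows "F = Node (take (D a) F') # drop (D a) F'" "L \<circ> phi (D a) = L'" "c \<circ> phi (D a) = c'"
    "L [0] = a" "c [0] = g" "\<And>w. w \<notin> range (phi (D a)) \<Longrightarrow> w \<noteq> [0] \<Longrightarrow> L w = 0 \<and> c w = Col 0"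
    "take (D a) F' \<noteq> []" "length (take (D a) F') = D a" "take (D a) F' @ drop (D a) F' = F'"
proof -
  let ?m = "D a"
  have e: "F = Node (take ?m F') # drop ?m F'"
    "L = (\<lambda>w. if w = [0] then a else if w \<in> range (phi ?m) then L' (psi ?m w) else 0)"
    "c = (\<lambda>w. if w = [0] then g else if w \<in> range (phi ?m) then c' (psi ?m w) else Col 0)"
    using assms(3) unfolding attach_def by auto
  show "F = Node (take (D a) F') # drop (D a) F'" by (rule e(1))
  show "L \<circ> phi (D a) = L'" unfolding e(2) by (auto simp: fun_eq_iff)
  show "c \<circ> phi (D a) = c'" unfolding e(3) by (auto simp: fun_eq_iff)
  show "L [0] = a" unfolding e(2) by simp
  show "c [0] = g" unfolding e(3) by simp
  show "\<And>w. w \<notin> range (phi (D a)) \<Longrightarrow> w \<noteq> [0] \<Longrightarrow> L w = 0 \<and> c w = Col 0"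
    unfolding e(2,3) by simp
  show "take (D a) F' \<noteq> []" using assms(1,2) by (cases F') auto
  show "length (take (D a) F') = D a" using assms(2) by simp
  show "take (D a) F' @ drop (D a) F' = F'" by simp
qed

lemma root_decomp:
  assumes fin: "finite \<Lambda>" and ne: "\<Lambda> \<noteq> {}" and D1: "\<forall>x\<in>\<Lambda>. 1 \<le> D x"
    and ell: "(\<Sum>x\<in>\<Lambda>. D x) < r0 + card \<Lambda>"
  shows "bij_betw detach (QS \<Lambda> D r0 k (\<lambda>i. i = 0)) (SIGMA a:\<Lambda>. colset \<Lambda> D k a \<times> YS \<Lambda> D r0 k a)"
proof (rule bij_betw_byWitness[where f' = "attach D"])
  let ?\<mu> = "Min \<Lambda>"
  have \<mu>: "?\<mu> \<in> \<Lambda>" using fin ne by simp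
  have YX: "YS \<Lambda> D r0 k a \<subseteq> XX (\<Lambda> - {a}) D r0 k" for a
    unfolding YS_def QS_def by auto
  have lenF': "D a \<le> length F'" if "a \<in> \<Lambda>" "(F', L', c') \<in> XX (\<Lambda> - {a}) D r0 k" for a F' L' c'
  proof -
    have "length F' + (\<Sum>x\<in>\<Lambda> - {a}. D x) = r0 + card (\<Lambda> - {a})"
      using XX_length[OF that(2)] fin by simp
    moreover have "(\<Sum>x\<in>\<Lambda>. D x) = D a + (\<Sum>x\<in>\<Lambda> - {a}. D x)" using sum_remove_nat[OF fin that(1)] .
    moreover have "card (\<Lambda> - {a}) = card \<Lambda> - 1" using fin that(1) by simp
    moreover have "card \<Lambda> \<ge> 1" using fin that(1) by (metis card_0_eq empty_iff less_one not_le)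
    ultimately show ?thesis using ell by linarith
  qed
  have QSdec: "\<exists>cs rest. F = Node cs # rest \<and> cs \<noteq> []" if "(F, L, c) \<in> QS \<Lambda> D r0 k (\<lambda>i. i = 0)" for F L c
  proof -
    have X: "(F, L, c) \<in> XX \<Lambda> D r0 k" "\<forall>v \<in> internal F. L v = ?\<mu> \<longrightarrow> hd v = 0"
      using that unfolding QS_def by auto
    obtain v where "v \<in> internal F" "L v = ?\<mu>" using XX_bij[OF X(1)] \<mu> unfolding bij_betw_def by auto
    then show ?thesis using X(2) first_root by blast
  qed
  show "\<forall>y\<in>QS \<Lambda> D r0 k (\<lambda>i. i = 0). attach D (detach y) = y"
  proof
    fix y assume y: "y \<in> QS \<Lambda> D r0 k (\<lambda>i. i = 0)"
    obtain F L c where yy: "y = (F, L, c)" by (cases y)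
    obtain cs rest where F: "F = Node cs # rest" and ne: "cs \<noteq> []" using QSdec y yy by blast
    let ?m = "length cs"
    have X: "(F, L, c) \<in> XX \<Lambda> D r0 k" using y yy unfolding QS_def by auto
    note XF = XX_F1[where cs=cs and rest=rest and F'="cs @ rest" and m="length cs", OF F refl refl ne X]
    have dt: "detach y = (L [0], c [0], cs @ rest, L \<circ> phi ?m, c \<circ> phi ?m)"
      unfolding yy detach_def F by simp
    have "attach D (detach y) = (F, L, c)"
      unfolding dt attach_def F using XF(2,5) by (auto simp: fun_eq_iff)
    then show "attach D (detach y) = y" using yy by simp
  qed
  show "\<forall>x\<in>(SIGMA a:\<Lambda>. colset \<Lambda> D k a \<times> YS \<Lambda> D r0 k a). detach (attach D x) = x"
  proof
    fix x assume x: "x \<in> (SIGMA a:\<Lambda>. colset \<Lambda> D k a \<times> YS \<Lambda> D r0 k a)"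
    obtain a g F' L' c' where xx: "x = (a, g, F', L', c')" by (cases x) auto
    have a: "a \<in> \<Lambda>" and Y: "(F', L', c') \<in> XX (\<Lambda> - {a}) D r0 k" using x xx YX by auto
    obtain F L c where at: "attach D (a, g, F', L', c') = (F, L, c)" by (cases "attach D (a, g, F', L', c')") auto
    note P = attach_props[OF _ lenF'[OF a Y] at] 
    have D1a: "1 \<le> D a" using D1 a by auto
    show "detach (attach D x) = x"
      unfolding xx at detach_def using P[OF D1a] by simp
  qed
  show "detach ` QS \<Lambda> D r0 k (\<lambda>i. i = 0) \<subseteq> (SIGMA a:\<Lambda>. colset \<Lambda> D k a \<times> YS \<Lambda> D r0 k a)"
  proof
    fix z assume "z \<in> detach ` QS \<Lambda> D r0 k (\<lambda>i. i = 0)"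
    then obtain y where y: "y \<in> QS \<Lambda> D r0 k (\<lambda>i. i = 0)" and z: "z = detach y" by auto
    obtain F L c where yy: "y = (F, L, c)" by (cases y)
    obtain cs rest where F: "F = Node cs # rest" and ne: "cs \<noteq> []" using QSdec y yy by blast
    let ?m = "length cs"
    have X: "(F, L, c) \<in> XX \<Lambda> D r0 k" and loc: "\<forall>v \<in> internal F. L v = ?\<mu> \<longrightarrow> hd v = 0"
      using y yy unfolding QS_def by auto
    note XF = XX_F1[where cs=cs and rest=rest and F'="cs @ rest" and m="length cs", OF F refl refl ne X]
    have dt: "z = (L [0], c [0], cs @ rest, L \<circ> phi ?m, c \<circ> phi ?m)"
      unfolding z yy detach_def F by simp
    let ?a = "L [0]"
    show "z \<in> (SIGMA a:\<Lambda>. colset \<Lambda> D k a \<times> YS \<Lambda> D r0 k a)"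
    proof (cases "?a = ?\<mu>")
      case True
      have "proper_vertex F L [0]" using root_proper1[where cs=cs and rest=rest and F'="cs @ rest" and m="length cs", OF F refl refl ne XF(3) fin True] .
      then have "c [0] \<in> colset \<Lambda> D k ?a" using XF(4) True XF(2)
        unfolding allowed_0[where cs=cs and rest=rest and F'="cs @ rest" and m="length cs", OF F refl refl ne] colset_def by simp
      moreover have "(cs @ rest, L \<circ> phi ?m, c \<circ> phi ?m) \<in> YS \<Lambda> D r0 k ?a"
        using XF(3) True unfolding YS_def by simp
      ultimately show ?thesis using dt XF(1) by simp
    next
      case False
      obtain v where v: "v \<in> internal F" "L v = ?\<mu>" using XX_bij[OF X] \<mu> unfolding bij_betw_def by auto
      have "v \<noteq> [0]" using v False by auto
      then obtain u where u: "u \<in> internal (cs @ rest)" "v = phi ?m u"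
        using v(1) int_F[where cs=cs and rest=rest and F'="cs @ rest" and m="length cs", OF F refl refl ne] by auto
      have hu: "hd u < ?m" using loc v u hd_phi internal_nonempty by metis
      have "\<not> proper_vertex F L [0]"
        using root_improper[where L=L and cs=cs and rest=rest and F'="cs @ rest" and m="length cs", OF F refl refl ne XF(1) fin False u(1)] v u hu by simp
      then have "c [0] \<in> colset \<Lambda> D k ?a" using XF(4) False XF(2)
        unfolding allowed_0[where cs=cs and rest=rest and F'="cs @ rest" and m="length cs", OF F refl refl ne] colset_def by simp
      moreover have "(cs @ rest, L \<circ> phi ?m, c \<circ> phi ?m) \<in> YS \<Lambda> D r0 k ?a"
      proof -
        have mm: "Min (\<Lambda> - {?a}) = ?\<mu>" using Min_remove[OF fin XF(1) False] .
        have "\<forall>w\<in>internal (cs @ rest). (L \<circ> phi ?m) w = ?\<mu> \<longrightarrow> hd w < D ?a"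
        proof (intro ballI impI)
          fix w assume w: "w \<in> internal (cs @ rest)" "(L \<circ> phi ?m) w = ?\<mu>"
          have "phi ?m w \<in> internal F" using w int_F[where cs=cs and rest=rest and F'="cs @ rest" and m="length cs", OF F refl refl ne] by auto
          then have "hd (phi ?m w) = 0" using loc w by auto
          then show "hd w < D ?a" using hd_phi internal_nonempty[OF w(1)] XF(2) by metis
        qed
        then show ?thesis using XF(3) False mm unfolding YS_def QS_def by simp
      qed
      ultimately show ?thesis using dt XF(1) by simp
    qed
  qed
  show "attach D ` (SIGMA a:\<Lambda>. colset \<Lambda> D k a \<times> YS \<Lambda> D r0 k a) \<subseteq> QS \<Lambda> D r0 k (\<lambda>i. i = 0)"
  proof
    fix z assume "z \<in> attach D ` (SIGMA a:\<Lambda>. colset \<Lambda> D k a \<times> YS \<Lambda> D r0 k a)"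
    then obtain x where x: "x \<in> (SIGMA a:\<Lambda>. colset \<Lambda> D k a \<times> YS \<Lambda> D r0 k a)" and z: "z = attach D x" by auto
    obtain a g F' L' c' where xx: "x = (a, g, F', L', c')" by (cases x) auto
    have a: "a \<in> \<Lambda>" and g: "g \<in> colset \<Lambda> D k a" and YY: "(F', L', c') \<in> YS \<Lambda> D r0 k a"
      using x xx by auto
    have Y: "(F', L', c') \<in> XX (\<Lambda> - {a}) D r0 k" using YY YX by auto
    obtain F L c where at: "attach D (a, g, F', L', c') = (F, L, c)" by (cases "attach D (a, g, F', L', c')") auto
    have D1a: "1 \<le> D a" using D1 a by auto
    note P = attach_props[OF D1a lenF'[OF a Y] at]
    let ?cs = "take (D a) F'" and ?rest = "drop (D a) F'"
    have F'eq: "F' = ?cs @ ?rest" using P(9) by simp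
    have mD: "D a = length ?cs" using P(8) by simp
    note int = int_F[OF P(1) F'eq mD P(7)]
    have Y': "(F', L \<circ> phi (D a), c \<circ> phi (D a)) \<in> XX (\<Lambda> - {L [0]}) D r0 k" using Y P(2,3,4) by simp
    have allw: "c [0] \<in> allowed F L k [0]"
    proof (cases "a = ?\<mu>")
      case True
      have "proper_vertex F L [0]" using root_proper1[OF P(1) F'eq mD P(7) Y' fin] True P(4) by simp
      then show ?thesis using g True P(5) unfolding allowed_0[OF P(1) F'eq mD P(7)] colset_def by simp
    next
      case False
      have mm: "Min (\<Lambda> - {a}) = ?\<mu>" using Min_remove[OF fin a False] .
      have "?\<mu> \<in> L' ` internal F'" using XX_bij[OF Y] \<mu> False unfolding bij_betw_def by auto
      then obtain u where u: "u \<in> internal F'" "L' u = ?\<mu>" by auto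
      have "hd u < D a" using YY False mm u unfolding YS_def QS_def by auto
      then have "\<not> proper_vertex F L [0]"
        using root_improper[where L=L and \<Lambda>=\<Lambda> and u=u, OF P(1) F'eq mD P(7)] P(2,4) a fin False u by auto
      then show ?thesis using g False P(5) unfolding allowed_0[OF P(1) F'eq mD P(7)] colset_def by simp
    qed
    have XF: "(F, L, c) \<in> XX \<Lambda> D r0 k"
      using XX_F[OF P(1) F'eq mD P(7), of L c \<Lambda> D r0 k] P(4,6) a Y' allw by simp
    have loc: "\<forall>v \<in> internal F. L v = ?\<mu> \<longrightarrow> hd v = 0"
    proof (intro ballI impI)
      fix v assume v: "v \<in> internal F" "L v = ?\<mu>"
      show "hd v = 0"
      proof (cases "v = [0]")
        case True then show ?thesis by simp
      next
        case False
        then obtain u where u: "u \<in> internal F'" "v = phi (D a) u" using v(1) int by auto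
        have Lu: "L' u = ?\<mu>" using v u P(2) by (metis comp_apply)
        have "a \<noteq> ?\<mu>"
        proof
          assume "a = ?\<mu>"
          have "L' u \<in> \<Lambda> - {a}" using XX_bij[OF Y] u unfolding bij_betw_def by auto
          then show False using Lu \<open>a = ?\<mu>\<close> by simp
        qed
        then have mm: "Min (\<Lambda> - {a}) = ?\<mu>" using Min_remove[OF fin a] by simp
        have "hd u < D a" using YY \<open>a \<noteq> ?\<mu>\<close> mm u Lu unfolding YS_def QS_def by auto
        then show ?thesis using u hd_phi internal_nonempty by metis
      qed
    qed
    show "z \<in> QS \<Lambda> D r0 k (\<lambda>i. i = 0)" using XF loc z xx at unfolding QS_def by simp
  qed
qed



fun hm :: "(nat \<Rightarrow> nat) \<Rightarrow> nat list \<Rightarrow> nat list" where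
  "hm g [] = []"
| "hm g (j # p) = g j # p"

lemma prefix_hm: "inj g \<Longrightarrow> prefix (hm g u) (hm g v) \<longleftrightarrow> prefix u v"
  by (cases u; cases v) (auto simp: inj_eq)

lemma hm_comp: "(\<And>j. g (g' j) = j) \<Longrightarrow> hm g (hm g' v) = v"
  by (cases v) auto

definition sgf :: "nat \<Rightarrow> nat \<Rightarrow> nat" where "sgf l j = (if j < l then Suc j mod l else j)"
definition tgf :: "nat \<Rightarrow> nat \<Rightarrow> nat" where "tgf l j = (if j < l then (j + l - 1) mod l else j)"

lemma sgf_tgf: "sgf l (tgf l j) = j"
proof (cases "j < l")
  case True
  then show ?thesis unfolding sgf_def tgf_def
    by (cases j) (auto simp: mod_Suc_eq Suc_diff_Suc)
next
  case False then show ?thesis unfolding sgf_def tgf_def by simp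
qed

lemma tgf_sgf: "tgf l (sgf l j) = j"
proof (cases "j < l")
  case True
  show ?thesis
  proof (cases "Suc j = l")
    case True then show ?thesis unfolding sgf_def tgf_def by auto
  next
    case False
    then have "Suc j < l" using \<open>j < l\<close> by simp
    then show ?thesis unfolding sgf_def tgf_def using \<open>j < l\<close> by simp
  qed
next
  case False then show ?thesis unfolding sgf_def tgf_def by simp
qed

lemma inj_sgf: "inj (sgf l)" by (metis injI tgf_sgf)
lemma inj_tgf: "inj (tgf l)" by (metis injI sgf_tgf)

definition rotl :: "ptree list \<Rightarrow> ptree list" where "rotl F = tl F @ [hd F]"
definition rotr :: "ptree list \<Rightarrow> ptree list" where "rotr F = last F # butlast F"

lemma rotl_rotr: "F \<noteq> [] \<Longrightarrow> rotl (rotr F) = F"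
  unfolding rotl_def rotr_def by simp

lemma rotr_rotl: "F \<noteq> [] \<Longrightarrow> rotr (rotl F) = F"
  unfolding rotl_def rotr_def by (cases F) auto

lemma length_rotl[simp]: "F \<noteq> [] \<Longrightarrow> length (rotl F) = length F"
  unfolding rotl_def by (cases F) auto

lemma length_rotr[simp]: "F \<noteq> [] \<Longrightarrow> length (rotr F) = length F"
  unfolding rotr_def by (cases F) auto

lemma nth_rotl: "F \<noteq> [] \<Longrightarrow> j < length F \<Longrightarrow> rotl F ! j = F ! (Suc j mod length F)"
proof -
  assume "F \<noteq> []" "j < length F"
  then obtain T R where F: "F = T # R" by (cases F) auto
  show ?thesis
  proof (cases "j < length R")
    case True then show ?thesis using F by (simp add: rotl_def nth_append)
  next
    case False
    then have "j = length R" using \<open>j < length F\<close> F by simp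
    then show ?thesis using F by (simp add: rotl_def nth_append)
  qed
qed

lemma fsub_rotl: "F \<noteq> [] \<Longrightarrow> fsub (rotl F) v = fsub F (hm (sgf (length F)) v)"
proof (cases v)
  case Nil then show ?thesis by simp
next
  case (Cons j p)
  assume ne: "F \<noteq> []"
  show ?thesis
  proof (cases "j < length F")
    case True
    have "Suc j mod length F < length F" using ne by simp
    then show ?thesis using Cons True ne by (simp add: nth_rotl sgf_def)
  next
    case False then show ?thesis using Cons ne by (simp add: sgf_def)
  qed
qed

lemma bij_vimage: "bij h \<Longrightarrow> bij_betw h (h -` A) A"
proof -
  assume "bij h"
  then have i: "inj h" and s: "surj h" unfolding bij_def by auto
  have "inj_on h (h -` A)" using inj_on_subset[OF i subset_UNIV] .
  moreover have "h ` (h -` A) = A" using s by (simp add: image_vimage_eq)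
  ultimately show ?thesis unfolding bij_betw_def by simp
qed

lemma transfer_XX:
  assumes h: "bij h" and fs: "\<And>v. fsub F' v = fsub F (h v)"
    and pf: "\<And>u v. prefix (h u) (h v) \<longleftrightarrow> prefix u v"
    and X: "(F, L, c) \<in> XX \<Lambda> D r0 k"
  shows "(F', L \<circ> h, c \<circ> h) \<in> XX \<Lambda> D r0 k" "internal F' = h -` internal F"
proof -
  have V: "verts F' = h -` verts F" unfolding verts_def using fs by auto
  have dg: "deg F' v = deg F (h v)" for v unfolding deg_def using fs by simp
  show I: "internal F' = h -` internal F" unfolding internal_def V using dg by auto
  have lv: "{v \<in> verts F'. deg F' v = 0} = h -` {v \<in> verts F. deg F v = 0}" using V dg by auto
  have r0: "card {v \<in> verts F. deg F v = 0} = r0" and bij: "bij_betw L (internal F) \<Lambda>"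
    and z: "\<forall>v. v \<notin> internal F \<longrightarrow> L v = 0" and dgc: "\<forall>v \<in> internal F. deg F v = D (L v)"
    and pc: "proper_colouring F L k c"
    using X unfolding XX_def by auto
  have r0': "card {v \<in> verts F'. deg F' v = 0} = r0"
    using lv bij_betw_same_card[OF bij_vimage[OF h]] r0 by metis
  have bij': "bij_betw (L \<circ> h) (internal F') \<Lambda>"
    unfolding I using bij_betw_trans[OF bij_vimage[OF h] bij] .
  have z': "\<forall>v. v \<notin> internal F' \<longrightarrow> (L \<circ> h) v = 0" using z I by auto
  have dgc': "\<forall>v \<in> internal F'. deg F' v = D ((L \<circ> h) v)" using dgc I dg by auto
  have sur: "\<And>w. \<exists>v. w = h v" using h unfolding bij_def by (metis surjD)
  have pv: "proper_vertex F' (L \<circ> h) v \<longleftrightarrow> proper_vertex F L (h v)" for v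
  proof -
    have "proper_vertex F L (h v) \<longleftrightarrow> (\<forall>w. h w \<in> internal F \<longrightarrow> prefix (h v) (h w) \<longrightarrow> L (h v) \<le> L (h w))"
      unfolding proper_vertex_def descendant_def using sur by metis
    then show ?thesis unfolding proper_vertex_def descendant_def I using pf by auto
  qed
  have al: "allowed F' (L \<circ> h) k v = allowed F L k (h v)" for v
    unfolding allowed_def pv dg ..
  have pc': "proper_colouring F' (L \<circ> h) k (c \<circ> h)"
    using pc unfolding pc_alt I al by auto
  show "(F', L \<circ> h, c \<circ> h) \<in> XX \<Lambda> D r0 k"
    unfolding XX_def using r0' bij' z' dgc' pc' by simp
qed



lemma bij_hm_sgf: "bij (hm (sgf l))"
  by (rule o_bij[where g = "hm (tgf l)"]) (auto simp: fun_eq_iff hm_comp sgf_tgf tgf_sgf)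

lemma bij_hm_tgf: "bij (hm (tgf l))"
  by (rule o_bij[where g = "hm (sgf l)"]) (auto simp: fun_eq_iff hm_comp sgf_tgf tgf_sgf)

definition rot :: "ptree list \<times> (nat list \<Rightarrow> nat) \<times> (nat list \<Rightarrow> colour) \<Rightarrow> ptree list \<times> (nat list \<Rightarrow> nat) \<times> (nat list \<Rightarrow> colour)" where
  "rot = (\<lambda>(F, L, c). (rotl F, L \<circ> hm (sgf (length F)), c \<circ> hm (sgf (length F))))"

definition rotinv :: "ptree list \<times> (nat list \<Rightarrow> nat) \<times> (nat list \<Rightarrow> colour) \<Rightarrow> ptree list \<times> (nat list \<Rightarrow> nat) \<times> (nat list \<Rightarrow> colour)" where
  "rotinv = (\<lambda>(F, L, c). (rotr F, L \<circ> hm (tgf (length F)), c \<circ> hm (tgf (length F))))"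

lemma QS_XX: "QS \<Lambda> D r0 k P \<subseteq> XX \<Lambda> D r0 k" unfolding QS_def by auto

lemma rot_bij:
  assumes len0: "\<And>y. y \<in> XX \<Lambda> D r0 k \<Longrightarrow> length (fst y) = l" and t: "Suc t < l"
  shows "bij_betw rot (QS \<Lambda> D r0 k (\<lambda>i. i = Suc t)) (QS \<Lambda> D r0 k (\<lambda>i. i = t))"
proof (rule bij_betw_byWitness[where f' = rotinv])
  have len: "length F = l" if "(F, L, c) \<in> XX \<Lambda> D r0 k" for F L c using len0[OF that] by simp
  have l0: "0 < l" using t by simp
  have cmp1: "hm (sgf l) \<circ> hm (tgf l) = id"
    by (auto simp: fun_eq_iff hm_comp sgf_tgf)
  have cmp2: "hm (tgf l) \<circ> hm (sgf l) = id"
    by (auto simp: fun_eq_iff hm_comp tgf_sgf)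
  show "\<forall>y\<in>QS \<Lambda> D r0 k (\<lambda>i. i = Suc t). rotinv (rot y) = y"
  proof
    fix y assume y: "y \<in> QS \<Lambda> D r0 k (\<lambda>i. i = Suc t)"
    obtain F L c where yy: "y = (F, L, c)" by (cases y)
    have lF: "length F = l" using len y yy QS_XX by blast
    then have ne: "F \<noteq> []" using l0 by auto
    show "rotinv (rot y) = y" unfolding yy rot_def rotinv_def using ne lF cmp1
      by (simp add: rotr_rotl comp_assoc)
  qed
  show "\<forall>y\<in>QS \<Lambda> D r0 k (\<lambda>i. i = t). rot (rotinv y) = y"
  proof
    fix y assume y: "y \<in> QS \<Lambda> D r0 k (\<lambda>i. i = t)"
    obtain F L c where yy: "y = (F, L, c)" by (cases y)
    have lF: "length F = l" using len y yy QS_XX by blast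
    then have ne: "F \<noteq> []" using l0 by auto
    have ne': "rotr F \<noteq> []" unfolding rotr_def by simp
    show "rot (rotinv y) = y" unfolding yy rot_def rotinv_def using ne lF cmp2
      by (simp add: rotl_rotr comp_assoc)
  qed
  show "rot ` QS \<Lambda> D r0 k (\<lambda>i. i = Suc t) \<subseteq> QS \<Lambda> D r0 k (\<lambda>i. i = t)"
  proof
    fix z assume "z \<in> rot ` QS \<Lambda> D r0 k (\<lambda>i. i = Suc t)"
    then obtain y where y: "y \<in> QS \<Lambda> D r0 k (\<lambda>i. i = Suc t)" and z: "z = rot y" by auto
    obtain F L c where yy: "y = (F, L, c)" by (cases y)
    have X: "(F, L, c) \<in> XX \<Lambda> D r0 k" and loc: "\<forall>v\<in>internal F. L v = Min \<Lambda> \<longrightarrow> hd v = Suc t"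
      using y yy unfolding QS_def by auto
    have lF: "length F = l" using len X by blast
    then have ne: "F \<noteq> []" using l0 by auto
    have fs: "fsub (rotl F) v = fsub F (hm (sgf l) v)" for v using fsub_rotl[OF ne] lF by simp
    have pf: "prefix (hm (sgf l) u) (hm (sgf l) v) \<longleftrightarrow> prefix u v" for u v
      using prefix_hm[OF inj_sgf] .
    note T = transfer_XX[OF bij_hm_sgf fs pf X]
    have z': "z = (rotl F, L \<circ> hm (sgf l), c \<circ> hm (sgf l))" unfolding z yy rot_def using lF by simp
    have loc': "\<forall>v\<in>internal (rotl F). (L \<circ> hm (sgf l)) v = Min \<Lambda> \<longrightarrow> hd v = t"
    proof (intro ballI impI)
      fix v assume v: "v \<in> internal (rotl F)" "(L \<circ> hm (sgf l)) v = Min \<Lambda>"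
      have vv: "v \<in> verts (rotl F)" using v unfolding internal_def by auto
      obtain j p where vj: "v = j # p" using hd_verts[OF vv] by (cases v) auto
      have jl: "j < l" using hd_verts[OF vv] vj lF ne by simp
      have "hd (hm (sgf l) v) = Suc t" using loc v T(2) by auto
      then have "Suc j mod l = Suc t" using vj jl by (simp add: sgf_def)
      then have "j = t"
        by (metis Suc_lessI jl mod_less mod_self nat.inject nat.simps(3))
      then show "hd v = t" using vj by simp
    qed
    show "z \<in> QS \<Lambda> D r0 k (\<lambda>i. i = t)" unfolding z' QS_def using T(1) loc' by simp
  qed
  show "rotinv ` QS \<Lambda> D r0 k (\<lambda>i. i = t) \<subseteq> QS \<Lambda> D r0 k (\<lambda>i. i = Suc t)"
  proof
    fix z assume "z \<in> rotinv ` QS \<Lambda> D r0 k (\<lambda>i. i = t)"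
    then obtain y where y: "y \<in> QS \<Lambda> D r0 k (\<lambda>i. i = t)" and z: "z = rotinv y" by auto
    obtain F L c where yy: "y = (F, L, c)" by (cases y)
    have X: "(F, L, c) \<in> XX \<Lambda> D r0 k" and loc: "\<forall>v\<in>internal F. L v = Min \<Lambda> \<longrightarrow> hd v = t"
      using y yy unfolding QS_def by auto
    have lF: "length F = l" using len X by blast
    then have ne: "F \<noteq> []" using l0 by auto
    let ?G = "rotr F"
    have neG: "?G \<noteq> []" unfolding rotr_def by simp
    have lG: "length ?G = l" using lF ne by simp
    have fs: "fsub ?G v = fsub F (hm (tgf l) v)" for v
    proof -
      have "fsub F (hm (tgf l) v) = fsub (rotl ?G) (hm (tgf l) v)" using rotl_rotr[OF ne] by simp
      also have "\<dots> = fsub ?G (hm (sgf l) (hm (tgf l) v))" using fsub_rotl[OF neG] lG by simp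
      also have "\<dots> = fsub ?G v" by (simp add: hm_comp sgf_tgf)
      finally show ?thesis by simp
    qed
    have pf: "prefix (hm (tgf l) u) (hm (tgf l) v) \<longleftrightarrow> prefix u v" for u v
      using prefix_hm[OF inj_tgf] .
    note T = transfer_XX[OF bij_hm_tgf fs pf X]
    have z': "z = (?G, L \<circ> hm (tgf l), c \<circ> hm (tgf l))" unfolding z yy rotinv_def using lF by simp
    have loc': "\<forall>v\<in>internal ?G. (L \<circ> hm (tgf l)) v = Min \<Lambda> \<longrightarrow> hd v = Suc t"
    proof (intro ballI impI)
      fix v assume v: "v \<in> internal ?G" "(L \<circ> hm (tgf l)) v = Min \<Lambda>"
      have vv: "v \<in> verts ?G" using v unfolding internal_def by auto
      obtain j p where vj: "v = j # p" using hd_verts[OF vv] by (cases v) auto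
      have jl: "j < l" using hd_verts[OF vv] vj lG by simp
      have "hd (hm (tgf l) v) = t" using loc v T(2) by auto
      then have e: "(j + l - 1) mod l = t" using vj jl by (simp add: tgf_def)
      have "j = Suc t"
      proof (cases j)
        case 0
        then have "(l - 1) mod l = t" using e by simp
        then have "l - 1 = t" using l0 by simp
        then show ?thesis using t by simp
      next
        case (Suc j')
        then have "(j' + l) mod l = t" using e by simp
        then have "j' = t" using jl Suc by simp
        then show ?thesis using Suc by simp
      qed
      then show "hd v = Suc t" using vj by simp
    qed
    show "z \<in> QS \<Lambda> D r0 k (\<lambda>i. i = Suc t)" unfolding z' QS_def using T(1) loc' by simp
  qed
qed



lemma fsz_rep: "fsz (replicate r (Node [])) = r"
  unfolding fsz_def by (induction r) auto

lemma internal_rep: "internal (replicate r (Node [])) = {}"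
proof -
  have "deg (replicate r (Node [])) v = 0" for v
  proof (cases v)
    case Nil then show ?thesis by (simp add: deg_def)
  next
    case (Cons i p)
    then show ?thesis unfolding deg_def
      by (cases p) (auto split: option.splits)
  qed
  then show ?thesis unfolding internal_def by auto
qed

lemma XX_empty: "XX {} D r0 k = {(replicate r0 (Node []), \<lambda>_. 0, \<lambda>_. Col 0)}"
proof
  show "XX {} D r0 k \<subseteq> {(replicate r0 (Node []), \<lambda>_. 0, \<lambda>_. Col 0)}"
  proof
    fix y assume y: "y \<in> XX {} D r0 k"
    obtain F L c where yy: "y = (F, L, c)" by (cases y)
    have X: "(F, L, c) \<in> XX {} D r0 k" using y yy by simp
    have I: "internal F = {}" using XX_bij[OF X] by (simp add: bij_betw_def)
    have lF: "length F = r0" using XX_length[OF X] by simp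
    have nodes: "F ! i = Node []" if "i < length F" for i
    proof (rule ccontr)
      assume "F ! i \<noteq> Node []"
      then obtain cs where cs: "F ! i = Node cs" "cs \<noteq> []" by (cases "F ! i") auto
      have "[i] \<in> internal F" using that cs unfolding internal_def verts_def deg_def by (auto simp: Suc_le_eq)
      then show False using I by simp
    qed
    have Feq: "F = replicate r0 (Node [])" using nodes lF by (simp add: list_eq_iff_nth_eq)
    have L0: "L = (\<lambda>_. 0)" using X I unfolding XX_def by auto
    have c0: "c = (\<lambda>_. Col 0)" using X I unfolding XX_def proper_colouring_def by auto
    show "y \<in> {(replicate r0 (Node []), \<lambda>_. 0, \<lambda>_. Col 0)}" using yy Feq L0 c0 by simp
  qed
next
  let ?F = "replicate r0 (Node [])"
  have I: "internal ?F = {}" by (rule internal_rep)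
  have "{v \<in> verts ?F. deg ?F v = 0} = verts ?F" using I unfolding internal_def by auto
  then have "card {v \<in> verts ?F. deg ?F v = 0} = r0" using finite_verts_fsz[of ?F] fsz_rep by simp
  then show "{(replicate r0 (Node []), \<lambda>_. 0, \<lambda>_. Col 0)} \<subseteq> XX {} D r0 k"
    using I unfolding XX_def proper_colouring_def by (simp add: bij_betw_def)
qed

lemma QS_family:
  assumes fin: "finite \<Lambda>" and ne: "\<Lambda> \<noteq> {}" and ell: "(\<Sum>x\<in>\<Lambda>. D x) < r0 + card \<Lambda>"
    and f0: "finite (QS \<Lambda> D r0 k (\<lambda>i. i = 0))"
  defines "l \<equiv> r0 + card \<Lambda> - (\<Sum>x\<in>\<Lambda>. D x)"
  shows "\<And>j. j \<le> l \<Longrightarrow> finite (QS \<Lambda> D r0 k (\<lambda>i. i < j)) \<and> card (QS \<Lambda> D r0 k (\<lambda>i. i < j)) = j * card (QS \<Lambda> D r0 k (\<lambda>i. i = 0))"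
    and "XX \<Lambda> D r0 k = QS \<Lambda> D r0 k (\<lambda>i. i < l)"
proof -
  have len: "length F = l" if "(F, L, c) \<in> XX \<Lambda> D r0 k" for F L c
    using XX_length[OF that fin] unfolding l_def by simp
  have len0: "length (fst y) = l" if "y \<in> XX \<Lambda> D r0 k" for y
    using len[of "fst y" "fst (snd y)" "snd (snd y)"] that by simp
  have all: "finite (QS \<Lambda> D r0 k (\<lambda>i. i = t)) \<and> card (QS \<Lambda> D r0 k (\<lambda>i. i = t)) = card (QS \<Lambda> D r0 k (\<lambda>i. i = 0))"
    if "t < l" for t
    using that
  proof (induction t)
    case 0 then show ?case using f0 by simp
  next
    case (Suc t)
    have b: "bij_betw rot (QS \<Lambda> D r0 k (\<lambda>i. i = Suc t)) (QS \<Lambda> D r0 k (\<lambda>i. i = t))"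
      by (rule rot_bij[OF len0 Suc.prems])
    have ih: "finite (QS \<Lambda> D r0 k (\<lambda>i. i = t)) \<and> card (QS \<Lambda> D r0 k (\<lambda>i. i = t)) = card (QS \<Lambda> D r0 k (\<lambda>i. i = 0))"
      using Suc by simp
    have "finite (QS \<Lambda> D r0 k (\<lambda>i. i = Suc t))" using bij_betw_finite[OF b] ih by simp
    moreover have "card (QS \<Lambda> D r0 k (\<lambda>i. i = Suc t)) = card (QS \<Lambda> D r0 k (\<lambda>i. i = t))"
      by (rule bij_betw_same_card[OF b])
    ultimately show ?case using ih by simp
  qed
  have \<mu>: "Min \<Lambda> \<in> \<Lambda>" using fin ne by simp
  have exv: "\<exists>v\<in>internal F. L v = Min \<Lambda>" if "(F, L, c) \<in> XX \<Lambda> D r0 k" for F L c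
    using XX_bij[OF that] \<mu> unfolding bij_betw_def by (metis imageE)
  have uniq: "v = w" if "(F, L, c) \<in> XX \<Lambda> D r0 k" "v \<in> internal F" "w \<in> internal F" "L v = L w" for F L c v w
    using XX_bij[OF that(1)] that unfolding bij_betw_def inj_on_def by blast
  have U: "QS \<Lambda> D r0 k (\<lambda>i. i < j) = (\<Union>t\<in>{..<j}. QS \<Lambda> D r0 k (\<lambda>i. i = t))" for j
  proof
    show "QS \<Lambda> D r0 k (\<lambda>i. i < j) \<subseteq> (\<Union>t\<in>{..<j}. QS \<Lambda> D r0 k (\<lambda>i. i = t))"
    proof
      fix y assume y: "y \<in> QS \<Lambda> D r0 k (\<lambda>i. i < j)"
      obtain F L c where yy: "y = (F, L, c)" by (cases y)
      have X: "(F, L, c) \<in> XX \<Lambda> D r0 k" and loc: "\<forall>v\<in>internal F. L v = Min \<Lambda> \<longrightarrow> hd v < j"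
        using y yy unfolding QS_def by auto
      obtain v where v: "v \<in> internal F" "L v = Min \<Lambda>" using exv[OF X] by blast
      have "\<forall>w\<in>internal F. L w = Min \<Lambda> \<longrightarrow> hd w = hd v" using uniq[OF X] v by metis
      then have "y \<in> QS \<Lambda> D r0 k (\<lambda>i. i = hd v)" using X yy unfolding QS_def by simp
      moreover have "hd v < j" using loc v by simp
      ultimately show "y \<in> (\<Union>t\<in>{..<j}. QS \<Lambda> D r0 k (\<lambda>i. i = t))" by auto
    qed
  next
    show "(\<Union>t\<in>{..<j}. QS \<Lambda> D r0 k (\<lambda>i. i = t)) \<subseteq> QS \<Lambda> D r0 k (\<lambda>i. i < j)"
      unfolding QS_def by auto
  qed
  have disj: "QS \<Lambda> D r0 k (\<lambda>i. i = s) \<inter> QS \<Lambda> D r0 k (\<lambda>i. i = t) = {}" if "s \<noteq> t" for s t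
  proof (rule ccontr)
    assume "QS \<Lambda> D r0 k (\<lambda>i. i = s) \<inter> QS \<Lambda> D r0 k (\<lambda>i. i = t) \<noteq> {}"
    then obtain F L c where y: "(F, L, c) \<in> QS \<Lambda> D r0 k (\<lambda>i. i = s)" "(F, L, c) \<in> QS \<Lambda> D r0 k (\<lambda>i. i = t)"
      by auto
    have X: "(F, L, c) \<in> XX \<Lambda> D r0 k" using y unfolding QS_def by auto
    obtain v where v: "v \<in> internal F" "L v = Min \<Lambda>" using exv[OF X] by blast
    have "hd v = s" "hd v = t" using y v unfolding QS_def by auto
    then show False using that by simp
  qed
  show "finite (QS \<Lambda> D r0 k (\<lambda>i. i < j)) \<and> card (QS \<Lambda> D r0 k (\<lambda>i. i < j)) = j * card (QS \<Lambda> D r0 k (\<lambda>i. i = 0))"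
    if "j \<le> l" for j
  proof -
    have fins: "\<forall>t\<in>{..<j}. finite (QS \<Lambda> D r0 k (\<lambda>i. i = t))"
    proof
      fix t assume "t \<in> {..<j}"
      then have "t < l" using that by simp
      then show "finite (QS \<Lambda> D r0 k (\<lambda>i. i = t))" using all by blast
    qed
    have "card (\<Union>t\<in>{..<j}. QS \<Lambda> D r0 k (\<lambda>i. i = t)) = (\<Sum>t\<in>{..<j}. card (QS \<Lambda> D r0 k (\<lambda>i. i = t)))"
      by (rule card_UN_disjoint) (use fins disj in auto)
    also have "\<dots> = (\<Sum>t\<in>{..<j}. card (QS \<Lambda> D r0 k (\<lambda>i. i = 0)))"
    proof (rule sum.cong)
      fix t assume "t \<in> {..<j}"
      then have "t < l" using that by simp
      then show "card (QS \<Lambda> D r0 k (\<lambda>i. i = t)) = card (QS \<Lambda> D r0 k (\<lambda>i. i = 0))" using all by blast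
    qed simp
    finally have c: "card (QS \<Lambda> D r0 k (\<lambda>i. i < j)) = j * card (QS \<Lambda> D r0 k (\<lambda>i. i = 0))"
      unfolding U[of j] by simp
    have f: "finite (QS \<Lambda> D r0 k (\<lambda>i. i < j))" unfolding U[of j] using fins by blast
    show ?thesis using c f by blast
  qed
  show "XX \<Lambda> D r0 k = QS \<Lambda> D r0 k (\<lambda>i. i < l)"
  proof
    show "XX \<Lambda> D r0 k \<subseteq> QS \<Lambda> D r0 k (\<lambda>i. i < l)"
    proof
      fix y assume y: "y \<in> XX \<Lambda> D r0 k"
      obtain F L c where yy: "y = (F, L, c)" by (cases y)
      have lF: "length F = l" using len y yy by simp
      have "\<forall>v\<in>internal F. hd v < l"
      proof
        fix v assume "v \<in> internal F"
        then have "v \<in> verts F" unfolding internal_def by simp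
        then show "hd v < l" using hd_verts[of v F] lF by simp
      qed
      then show "y \<in> QS \<Lambda> D r0 k (\<lambda>i. i < l)" using y yy unfolding QS_def by auto
    qed
  qed (rule QS_XX)
qed



definition Pk :: "nat \<Rightarrow> nat \<Rightarrow> nat \<Rightarrow> nat" where
  "Pk r0 k n = (\<Prod>i = 1..n - 1. r0 + i * (1 + k))"

lemma Pk_Suc: "1 \<le> n \<Longrightarrow> Pk r0 k (Suc n) = Pk r0 k n * (r0 + n * (1 + k))"
proof -
  assume "1 \<le> n"
  then obtain m where n: "n = Suc m" by (cases n) auto
  show ?thesis unfolding Pk_def n by (simp add: prod.cl_ivl_Suc)
qed

lemma Pk_1: "Pk r0 k 1 = 1" unfolding Pk_def by simp

lemma card_colset:
  "card (colset \<Lambda> D k a) = (if a = Min \<Lambda> then D a else D a + k)" "finite (colset \<Lambda> D k a)"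
proof -
  have c1: "card (Col ` {1..D a}) = D a" by (simp add: card_image inj_on_def)
  have c2: "card (Col' ` {1..k}) = k" by (simp add: card_image inj_on_def)
  have d: "Col ` {1..D a} \<inter> Col' ` {1..k} = {}" by auto
  show "card (colset \<Lambda> D k a) = (if a = Min \<Lambda> then D a else D a + k)"
  proof (cases "a = Min \<Lambda>")
    case True
    show ?thesis unfolding colset_def if_P[OF True] using c1 .
  next
    case False
    have "card (Col ` {1..D a} \<union> Col' ` {1..k}) = D a + k"
      using c1 c2 card_Un_disjoint[OF _ _ d] by simp
    then show ?thesis unfolding colset_def if_not_P[OF False] .
  qed
  show "finite (colset \<Lambda> D k a)" unfolding colset_def by simp
qed

lemma step:
  assumes fin: "finite \<Lambda>" and cardL: "card \<Lambda> = Suc n" and D1: "\<forall>x\<in>\<Lambda>. 1 \<le> D x"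
    and ell: "(\<Sum>x\<in>\<Lambda>. D x) < r0 + card \<Lambda>"
    and IH: "\<And>\<Lambda>'. finite \<Lambda>' \<Longrightarrow> card \<Lambda>' = n \<Longrightarrow> 1 \<le> n \<Longrightarrow> (\<forall>x\<in>\<Lambda>'. 1 \<le> D x) \<Longrightarrow>
       (\<Sum>x\<in>\<Lambda>'. D x) < r0 + card \<Lambda>' \<Longrightarrow>
       finite (QS \<Lambda>' D r0 k (\<lambda>i. i = 0)) \<and> card (QS \<Lambda>' D r0 k (\<lambda>i. i = 0)) = (\<Prod>x\<in>\<Lambda>'. D x) * Pk r0 k n"
  shows "finite (QS \<Lambda> D r0 k (\<lambda>i. i = 0)) \<and> card (QS \<Lambda> D r0 k (\<lambda>i. i = 0)) = (\<Prod>x\<in>\<Lambda>. D x) * Pk r0 k (Suc n)"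
proof -
  have ne: "\<Lambda> \<noteq> {}" using cardL by auto
  let ?\<mu> = "Min \<Lambda>"
  have \<mu>: "?\<mu> \<in> \<Lambda>" using fin ne by simp
  define la where "la a = r0 + n - (\<Sum>x\<in>\<Lambda> - {a}. D x)" for a
  define f where "f a = card (colset \<Lambda> D k a) * card (YS \<Lambda> D r0 k a)" for a
  have sub: "finite (\<Lambda> - {a})" "card (\<Lambda> - {a}) = n" "\<forall>x\<in>\<Lambda> - {a}. 1 \<le> D x"
    "(\<Sum>x\<in>\<Lambda> - {a}. D x) < r0 + card (\<Lambda> - {a})" "D a \<le> la a" "(\<Sum>x\<in>\<Lambda> - {a}. D x) \<le> r0 + n"
    if a: "a \<in> \<Lambda>" for a
  proof -
    show "finite (\<Lambda> - {a})" using fin by simp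
    show cn: "card (\<Lambda> - {a}) = n" using fin a cardL by simp
    show "\<forall>x\<in>\<Lambda> - {a}. 1 \<le> D x" using D1 by simp
    have s: "(\<Sum>x\<in>\<Lambda>. D x) = D a + (\<Sum>x\<in>\<Lambda> - {a}. D x)" using sum_remove_nat[OF fin a] .
    have "1 \<le> D a" using D1 a by simp
    then show "(\<Sum>x\<in>\<Lambda> - {a}. D x) < r0 + card (\<Lambda> - {a})" using s ell cn cardL by linarith
    show "D a \<le> la a" unfolding la_def using s ell cardL by linarith
    show "(\<Sum>x\<in>\<Lambda> - {a}. D x) \<le> r0 + n" using s ell cardL by linarith
  qed
  have fam: "finite (QS (\<Lambda> - {a}) D r0 k (\<lambda>i. i < j)) \<and>
      card (QS (\<Lambda> - {a}) D r0 k (\<lambda>i. i < j)) = j * ((\<Prod>x\<in>\<Lambda> - {a}. D x) * Pk r0 k n)"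
    "XX (\<Lambda> - {a}) D r0 k = QS (\<Lambda> - {a}) D r0 k (\<lambda>i. i < la a)"
    if a: "a \<in> \<Lambda>" and n1: "1 \<le> n" and j: "j \<le> la a" for a j
  proof -
    note S = sub[OF a]
    have ih: "finite (QS (\<Lambda> - {a}) D r0 k (\<lambda>i. i = 0)) \<and> card (QS (\<Lambda> - {a}) D r0 k (\<lambda>i. i = 0)) = (\<Prod>x\<in>\<Lambda> - {a}. D x) * Pk r0 k n"
      using IH[OF S(1) S(2) n1 S(3) S(4)] .
    have ne': "\<Lambda> - {a} \<noteq> {}"
    proof
      assume e: "\<Lambda> - {a} = {}"
      have "card (\<Lambda> - {a}) = 0" unfolding e by (rule card.empty)
      then show False using S(2) n1 by simp
    qed
    have lae: "la a = r0 + card (\<Lambda> - {a}) - (\<Sum>x\<in>\<Lambda> - {a}. D x)" unfolding la_def S(2) ..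
    note QF = QS_family[OF S(1) ne' S(4) conjunct1[OF ih]]
    show "finite (QS (\<Lambda> - {a}) D r0 k (\<lambda>i. i < j)) \<and>
      card (QS (\<Lambda> - {a}) D r0 k (\<lambda>i. i < j)) = j * ((\<Prod>x\<in>\<Lambda> - {a}. D x) * Pk r0 k n)"
      using QF(1)[of j] j ih unfolding lae by simp
    show "XX (\<Lambda> - {a}) D r0 k = QS (\<Lambda> - {a}) D r0 k (\<lambda>i. i < la a)"
      using QF(2) unfolding lae .
  qed
  have Yc: "finite (YS \<Lambda> D r0 k a) \<and> card (YS \<Lambda> D r0 k a) =
     (if a = ?\<mu> \<and> n = 0 then 1 else if a = ?\<mu> then la a * ((\<Prod>x\<in>\<Lambda> - {a}. D x) * Pk r0 k n)
      else D a * ((\<Prod>x\<in>\<Lambda> - {a}. D x) * Pk r0 k n))" if a: "a \<in> \<Lambda>" for a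
  proof (cases "a = ?\<mu>")
    case True
    show ?thesis
    proof (cases "n = 0")
      case True
      then have "\<Lambda> - {a} = {}" using sub(2)[OF a] sub(1)[OF a] by simp
      then have e: "\<Lambda> - {a} = {}" .
      have "YS \<Lambda> D r0 k a = XX (\<Lambda> - {a}) D r0 k" unfolding YS_def using \<open>a = ?\<mu>\<close> by simp
      also have "\<dots> = {(replicate r0 (Node []), \<lambda>_. 0, \<lambda>_. Col 0)}" unfolding e by (rule XX_empty)
      finally show ?thesis using \<open>a = ?\<mu>\<close> True by simp
    next
      case False
      then have n1: "1 \<le> n" by simp
      show ?thesis using \<open>a = ?\<mu>\<close> False fam[OF a n1 order_refl] unfolding YS_def by simp
    qed
  next
    case False
    have "card \<Lambda> \<ge> 2"
    proof -
      have "{a, ?\<mu>} \<subseteq> \<Lambda>" using a \<mu> by simp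
      then have "card {a, ?\<mu>} \<le> card \<Lambda>" using fin card_mono by blast
      then show ?thesis using False by simp
    qed
    then have n1: "1 \<le> n" using cardL by simp
    show ?thesis using False fam(1)[OF a n1 sub(5)[OF a]] unfolding YS_def by simp
  qed
  have bij: "bij_betw detach (QS \<Lambda> D r0 k (\<lambda>i. i = 0)) (SIGMA a:\<Lambda>. colset \<Lambda> D k a \<times> YS \<Lambda> D r0 k a)"
    using root_decomp[OF fin ne D1 ell] .
  have finS: "finite (SIGMA a:\<Lambda>. colset \<Lambda> D k a \<times> YS \<Lambda> D r0 k a)"
    using fin Yc card_colset(2) by (intro finite_SigmaI) auto
  have cardS: "card (SIGMA a:\<Lambda>. colset \<Lambda> D k a \<times> YS \<Lambda> D r0 k a) = (\<Sum>a\<in>\<Lambda>. f a)"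
    unfolding f_def using fin Yc card_colset(2) by (simp add: card_cartesian_product)
  have finQ: "finite (QS \<Lambda> D r0 k (\<lambda>i. i = 0))" using bij_betw_finite[OF bij] finS by simp
  have cQ: "card (QS \<Lambda> D r0 k (\<lambda>i. i = 0)) = (\<Sum>a\<in>\<Lambda>. f a)"
    using bij_betw_same_card[OF bij] cardS by simp
  have PD: "D a * (\<Prod>x\<in>\<Lambda> - {a}. D x) = (\<Prod>x\<in>\<Lambda>. D x)" if "a \<in> \<Lambda>" for a
    using prod.remove[OF fin that, of D] by simp
  have "(\<Sum>a\<in>\<Lambda>. f a) = (\<Prod>x\<in>\<Lambda>. D x) * Pk r0 k (Suc n)"
  proof (cases "n = 0")
    case True
    then obtain x where Lx: "\<Lambda> = {x}" using cardL by (metis One_nat_def card_1_singletonE)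
    have mx: "?\<mu> = x" using Lx by simp
    have "f ?\<mu> = D ?\<mu>" unfolding f_def using Yc[OF \<mu>] card_colset(1)[of \<Lambda> D k ?\<mu>] True by simp
    then have fx: "f x = D x" using mx by simp
    show ?thesis using True Pk_1 fx unfolding Lx by simp
  next
    case False
    then have n1: "1 \<le> n" by simp
    let ?C = "(\<Prod>x\<in>\<Lambda>. D x) * Pk r0 k n"
    have fmu: "f ?\<mu> = la ?\<mu> * ?C"
    proof -
      have "f ?\<mu> = D ?\<mu> * (la ?\<mu> * ((\<Prod>x\<in>\<Lambda> - {?\<mu>}. D x) * Pk r0 k n))"
        unfolding f_def using Yc[OF \<mu>] card_colset(1)[of \<Lambda> D k ?\<mu>] False by simp
      also have "\<dots> = la ?\<mu> * ((D ?\<mu> * (\<Prod>x\<in>\<Lambda> - {?\<mu>}. D x)) * Pk r0 k n)" by (simp add: ac_simps)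
      finally show ?thesis using PD[OF \<mu>] by simp
    qed
    have fa: "f a = (D a + k) * ?C" if "a \<in> \<Lambda> - {?\<mu>}" for a
    proof -
      have a: "a \<in> \<Lambda>" "a \<noteq> ?\<mu>" using that by auto
      have "f a = (D a + k) * (D a * ((\<Prod>x\<in>\<Lambda> - {a}. D x) * Pk r0 k n))"
        unfolding f_def using Yc[OF a(1)] card_colset(1)[of \<Lambda> D k a] a(2) by simp
      also have "\<dots> = (D a + k) * ((D a * (\<Prod>x\<in>\<Lambda> - {a}. D x)) * Pk r0 k n)" by (simp add: ac_simps)
      finally show ?thesis using PD[OF a(1)] by simp
    qed
    have "(\<Sum>a\<in>\<Lambda>. f a) = f ?\<mu> + (\<Sum>a\<in>\<Lambda> - {?\<mu>}. f a)" using sum_remove_nat[OF fin \<mu>] .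
    also have "(\<Sum>a\<in>\<Lambda> - {?\<mu>}. f a) = (\<Sum>a\<in>\<Lambda> - {?\<mu>}. (D a + k) * ?C)" using fa by (rule sum.cong[OF refl])
    also have "\<dots> = (\<Sum>a\<in>\<Lambda> - {?\<mu>}. (D a + k)) * ?C" by (simp add: sum_distrib_right)
    also have "(\<Sum>a\<in>\<Lambda> - {?\<mu>}. (D a + k)) = (\<Sum>a\<in>\<Lambda> - {?\<mu>}. D a) + n * k"
      using sub(2)[OF \<mu>] by (simp add: sum.distrib)
    finally have "(\<Sum>a\<in>\<Lambda>. f a) = (la ?\<mu> + ((\<Sum>a\<in>\<Lambda> - {?\<mu>}. D a) + n * k)) * ?C"
      using fmu by (simp add: algebra_simps)
    also have "la ?\<mu> + ((\<Sum>a\<in>\<Lambda> - {?\<mu>}. D a) + n * k) = r0 + n * (1 + k)"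
      unfolding la_def using sub(6)[OF \<mu>] by (simp add: algebra_simps)
    finally show ?thesis using Pk_Suc[OF n1] by (simp add: ac_simps)
  qed
  then show ?thesis using finQ cQ by simp
qed

lemma main_count:
  "finite \<Lambda> \<Longrightarrow> card \<Lambda> = Suc n \<Longrightarrow> (\<forall>x\<in>\<Lambda>. 1 \<le> D x) \<Longrightarrow> (\<Sum>x\<in>\<Lambda>. D x) < r0 + card \<Lambda> \<Longrightarrow>
   finite (QS \<Lambda> D r0 k (\<lambda>i. i = 0)) \<and> card (QS \<Lambda> D r0 k (\<lambda>i. i = 0)) = (\<Prod>x\<in>\<Lambda>. D x) * Pk r0 k (Suc n)"
proof (induction n arbitrary: \<Lambda>)
  case 0
  show ?case by (rule step[OF 0(1-4)]) simp
next
  case (Suc n)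
  show ?case
  proof (rule step[OF Suc.prems])
    fix \<Lambda>' :: "nat set"
    assume "finite \<Lambda>'" "card \<Lambda>' = Suc n" "1 \<le> Suc n" "\<forall>x\<in>\<Lambda>'. 1 \<le> D x" "(\<Sum>x\<in>\<Lambda>'. D x) < r0 + card \<Lambda>'"
    then show "finite (QS \<Lambda>' D r0 k (\<lambda>i. i = 0)) \<and> card (QS \<Lambda>' D r0 k (\<lambda>i. i = 0)) = (\<Prod>x\<in>\<Lambda>'. D x) * Pk r0 k (Suc n)"
      using Suc.IH by blast
  qed
qed



theorem mainTheorem7:
  fixes r :: "nat \<Rightarrow> nat" and k :: nat and S :: "nat \<Rightarrow> nat set"
  assumes "finite {d. r d \<noteq> 0}"
    and "nint r \<ge> 1"
    and "int (r 0) - (\<Sum>d \<in> {d. 1 \<le> d \<and> r d \<noteq> 0}. (int d - 1) * int (r d)) \<ge> 1"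
    and "S \<in> V r"
  shows "card (CFS1 r k S) =
           (\<Prod>d \<in> {d. 1 \<le> d \<and> r d \<noteq> 0}. d ^ r d) *
           (\<Prod>i = 1..nint r - 1. r 0 + i * (1 + k))"
proof -
  let ?n = "nint r"
  let ?I = "{d. 1 \<le> d \<and> r d \<noteq> 0}"
  have finI: "finite ?I" using assms(1) by (rule finite_subset[rotated]) auto
  have S0: "S 0 = {}" and Sdisj: "\<And>i j. 1 \<le> i \<Longrightarrow> 1 \<le> j \<Longrightarrow> i \<noteq> j \<Longrightarrow> S i \<inter> S j = {}"
    and SU: "(\<Union>i \<in> {i. 1 \<le> i}. S i) = {1..?n}" and Sc: "\<And>i. 1 \<le> i \<Longrightarrow> card (S i) = r i"
    using assms(4) unfolding V_def by auto
  define D where "D x = (THE i. 1 \<le> i \<and> x \<in> S i)" for x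
  have Dprop: "1 \<le> D x \<and> x \<in> S (D x)" if "x \<in> {1..?n}" for x
  proof -
    have "x \<in> (\<Union>i \<in> {i. 1 \<le> i}. S i)" using SU that by simp
    then obtain i where i: "1 \<le> i" "x \<in> S i" by blast
    have "(THE i. 1 \<le> i \<and> x \<in> S i) = i"
    proof (rule the_equality)
      show "1 \<le> i \<and> x \<in> S i" using i by simp
    next
      fix j assume j: "1 \<le> j \<and> x \<in> S j"
      show "j = i"
      proof (rule ccontr)
        assume "j \<noteq> i"
        then have "S j \<inter> S i = {}" using Sdisj j i(1) by simp
        then show False using j i by blast
      qed
    qed
    then show ?thesis using i unfolding D_def by simp
  qed
  have SsubI: "S i \<subseteq> {1..?n}" if "1 \<le> i" for i
  proof -
    have "S i \<subseteq> (\<Union>i \<in> {i. 1 \<le> i}. S i)" using that by blast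
    then show ?thesis using SU by simp
  qed
  have Deq: "D x = i" if "1 \<le> i" "x \<in> S i" for x i
  proof -
    have x: "x \<in> {1..?n}" using SsubI that by blast
    show ?thesis using Dprop[OF x] that Sdisj by blast
  qed
  have finS: "finite (S i)" if "1 \<le> i" for i using SsubI[OF that] finite_subset by blast
  have Sempty: "S i = {}" if "1 \<le> i" "r i = 0" for i using Sc[OF that(1)] finS[OF that(1)] that(2) by simp
  have Uni: "{1..?n} = (\<Union>d\<in>?I. S d)"
  proof
    show "{1..?n} \<subseteq> (\<Union>d\<in>?I. S d)"
    proof
      fix x assume x: "x \<in> {1..?n}"
      have "D x \<in> ?I" using Dprop[OF x] Sempty by fastforce
      then show "x \<in> (\<Union>d\<in>?I. S d)" using Dprop[OF x] by blast
    qed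
    show "(\<Union>d\<in>?I. S d) \<subseteq> {1..?n}" using SsubI by blast
  qed
  have dj: "\<forall>i\<in>?I. \<forall>j\<in>?I. i \<noteq> j \<longrightarrow> S i \<inter> S j = {}" using Sdisj by blast
  have finSI: "\<forall>i\<in>?I. finite (S i)" using finS by blast
  have prodD: "(\<Prod>x\<in>{1..?n}. D x) = (\<Prod>d\<in>?I. d ^ r d)"
  proof -
    have "(\<Prod>x\<in>{1..?n}. D x) = (\<Prod>d\<in>?I. (\<Prod>x\<in>S d. D x))"
      unfolding Uni by (rule prod.UNION_disjoint[OF finI finSI dj])
    also have "\<dots> = (\<Prod>d\<in>?I. d ^ r d)"
    proof (rule prod.cong[OF refl])
      fix d assume d: "d \<in> ?I"
      have "(\<Prod>x\<in>S d. D x) = (\<Prod>x\<in>S d. d)" using Deq d by (intro prod.cong) auto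
      then show "(\<Prod>x\<in>S d. D x) = d ^ r d" using Sc d by simp
    qed
    finally show ?thesis .
  qed
  have sumD: "(\<Sum>x\<in>{1..?n}. D x) = (\<Sum>d\<in>?I. d * r d)"
  proof -
    have "(\<Sum>x\<in>{1..?n}. D x) = (\<Sum>d\<in>?I. (\<Sum>x\<in>S d. D x))"
      unfolding Uni by (rule sum.UNION_disjoint[OF finI finSI dj])
    also have "\<dots> = (\<Sum>d\<in>?I. d * r d)"
    proof (rule sum.cong[OF refl])
      fix d assume d: "d \<in> ?I"
      have "(\<Sum>x\<in>S d. D x) = (\<Sum>x\<in>S d. d)" using Deq d by (intro sum.cong) auto
      then show "(\<Sum>x\<in>S d. D x) = d * r d" using Sc d by simp
    qed
    finally show ?thesis .
  qed
  have nsum: "?n = (\<Sum>d\<in>?I. r d)" unfolding nint_def ..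
  have ellc: "(\<Sum>x\<in>{1..?n}. D x) < r 0 + card {1..?n}"
  proof -
    have "(\<Sum>d\<in>?I. (int d - 1) * int (r d)) = (\<Sum>d\<in>?I. int (d * r d)) - (\<Sum>d\<in>?I. int (r d))"
      by (simp add: algebra_simps sum_subtractf)
    also have "\<dots> = int (\<Sum>d\<in>?I. d * r d) - int ?n" unfolding nsum by simp
    finally have e: "(\<Sum>d\<in>?I. (int d - 1) * int (r d)) = int (\<Sum>d\<in>?I. d * r d) - int ?n" .
    define s where "s = (\<Sum>d\<in>?I. d * r d)"
    have "int (r 0) - (int s - int ?n) \<ge> 1" using assms(3) e unfolding s_def by linarith
    then have "s < r 0 + ?n" by linarith
    then show ?thesis using sumD unfolding s_def by simp
  qed
  have D1: "\<forall>x\<in>{1..?n}. 1 \<le> D x" using Dprop by blast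
  have cn: "card {1..?n} = Suc (?n - 1)" using assms(2) by simp
  have M: "finite (QS {1..?n} D (r 0) k (\<lambda>i. i = 0)) \<and> card (QS {1..?n} D (r 0) k (\<lambda>i. i = 0)) = (\<Prod>x\<in>{1..?n}. D x) * Pk (r 0) k (Suc (?n - 1))"
    by (rule main_count[OF finite_atLeastAtMost cn D1 ellc])
  have EQ: "CFS1 r k S = QS {1..?n} D (r 0) k (\<lambda>i. i = 0)"
  proof -
    have Min1: "Min {1..?n} = 1" using assms(2) by (simp add: Min_eq_iff)
    have key: "((F, L, c) \<in> CFS1 r k S) \<longleftrightarrow> ((F, L, c) \<in> QS {1..?n} D (r 0) k (\<lambda>i. i = 0))" for F L c
    proof -
      have Sd: "(\<forall>v\<in>internal F. L v \<in> S (deg F v)) \<longleftrightarrow> (\<forall>v\<in>internal F. deg F v = D (L v))"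
        if bij: "bij_betw L (internal F) {1..?n}"
      proof
        assume A: "\<forall>v\<in>internal F. L v \<in> S (deg F v)"
        show "\<forall>v\<in>internal F. deg F v = D (L v)"
        proof
          fix v assume v: "v \<in> internal F"
          have "1 \<le> deg F v" using v unfolding internal_def by simp
          then show "deg F v = D (L v)" using Deq A v by metis
        qed
      next
        assume A: "\<forall>v\<in>internal F. deg F v = D (L v)"
        show "\<forall>v\<in>internal F. L v \<in> S (deg F v)"
        proof
          fix v assume v: "v \<in> internal F"
          have "L v \<in> {1..?n}" using bij v unfolding bij_betw_def by blast
          then show "L v \<in> S (deg F v)" using Dprop A v by metis
        qed
      qed
      have ty: "has_type F r \<longleftrightarrow> card {v \<in> verts F. deg F v = 0} = r 0"
        if bij: "bij_betw L (internal F) {1..?n}" and dg: "\<forall>v\<in>internal F. deg F v = D (L v)"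
      proof
        assume "has_type F r" then show "card {v \<in> verts F. deg F v = 0} = r 0" unfolding has_type_def by blast
      next
        assume r0: "card {v \<in> verts F. deg F v = 0} = r 0"
        show "has_type F r" unfolding has_type_def
        proof
          fix i
          show "card {v \<in> verts F. deg F v = i} = r i"
          proof (cases "i = 0")
            case True then show ?thesis using r0 by simp
          next
            case False
            then have i1: "1 \<le> i" by simp
            have e1: "{v \<in> verts F. deg F v = i} = {v \<in> internal F. deg F v = i}"
              using i1 unfolding internal_def by auto
            have bb: "bij_betw L {v \<in> internal F. deg F v = i} (L ` {v \<in> internal F. deg F v = i})"
              using bij unfolding bij_betw_def by (auto intro: inj_on_subset)
            have "L ` {v \<in> internal F. deg F v = i} = S i"
            proof
              show "L ` {v \<in> internal F. deg F v = i} \<subseteq> S i"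
              proof
                fix x assume "x \<in> L ` {v \<in> internal F. deg F v = i}"
                then obtain v where v: "v \<in> internal F" "deg F v = i" "x = L v" by auto
                have "L v \<in> {1..?n}" using bij v unfolding bij_betw_def by blast
                then show "x \<in> S i" using Dprop dg v by metis
              qed
            next
              show "S i \<subseteq> L ` {v \<in> internal F. deg F v = i}"
              proof
                fix x assume x: "x \<in> S i"
                then have "x \<in> {1..?n}" using SsubI[OF i1] by blast
                then have "x \<in> L ` internal F" using bij unfolding bij_betw_def by simp
                then obtain v where v: "v \<in> internal F" "L v = x" by (auto elim: imageE)
                have "deg F v = i" using dg v Deq[OF i1 x] by simp
                then show "x \<in> L ` {v \<in> internal F. deg F v = i}" using v by blast
              qed
            qed
            then show ?thesis using e1 bij_betw_same_card[OF bb] Sc[OF i1] by simp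
          qed
        qed
      qed
      have c1: "(F, L, c) \<in> CFS1 r k S \<longleftrightarrow> has_type F r \<and> (bij_betw L (internal F) {1..?n} \<and> (\<forall>v. v \<notin> internal F \<longrightarrow> L v = 0))
          \<and> proper_colouring F L k c \<and> (\<forall>v\<in>internal F. L v \<in> S (deg F v)) \<and> (\<forall>v\<in>internal F. L v = 1 \<longrightarrow> hd v = 0)"
        unfolding CFS1_def CFS_def CF_def labelling_def by simp
      have c2: "(F, L, c) \<in> QS {1..?n} D (r 0) k (\<lambda>i. i = 0) \<longleftrightarrow> (card {v \<in> verts F. deg F v = 0} = r 0 \<and> bij_betw L (internal F) {1..?n}
          \<and> (\<forall>v. v \<notin> internal F \<longrightarrow> L v = 0) \<and> (\<forall>v \<in> internal F. deg F v = D (L v))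
          \<and> proper_colouring F L k c) \<and> (\<forall>v\<in>internal F. L v = 1 \<longrightarrow> hd v = 0)"
        unfolding QS_def XX_def Min1 by simp
      show ?thesis unfolding c1 c2
      proof
        assume A: "has_type F r \<and> (bij_betw L (internal F) {1..?n} \<and> (\<forall>v. v \<notin> internal F \<longrightarrow> L v = 0))
          \<and> proper_colouring F L k c \<and> (\<forall>v\<in>internal F. L v \<in> S (deg F v)) \<and> (\<forall>v\<in>internal F. L v = 1 \<longrightarrow> hd v = 0)"
        then have b: "bij_betw L (internal F) {1..?n}" by blast
        have dg: "\<forall>v \<in> internal F. deg F v = D (L v)" using Sd[OF b] A by blast
        have "card {v \<in> verts F. deg F v = 0} = r 0" using ty[OF b dg] A by blast
        then show "(card {v \<in> verts F. deg F v = 0} = r 0 \<and> bij_betw L (internal F) {1..?n}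
          \<and> (\<forall>v. v \<notin> internal F \<longrightarrow> L v = 0) \<and> (\<forall>v \<in> internal F. deg F v = D (L v))
          \<and> proper_colouring F L k c) \<and> (\<forall>v\<in>internal F. L v = 1 \<longrightarrow> hd v = 0)"
          using A dg by blast
      next
        assume A: "(card {v \<in> verts F. deg F v = 0} = r 0 \<and> bij_betw L (internal F) {1..?n}
          \<and> (\<forall>v. v \<notin> internal F \<longrightarrow> L v = 0) \<and> (\<forall>v \<in> internal F. deg F v = D (L v))
          \<and> proper_colouring F L k c) \<and> (\<forall>v\<in>internal F. L v = 1 \<longrightarrow> hd v = 0)"
        then have b: "bij_betw L (internal F) {1..?n}" and dg: "\<forall>v \<in> internal F. deg F v = D (L v)" by blast+
        have "\<forall>v\<in>internal F. L v \<in> S (deg F v)" using Sd[OF b] dg by blast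
        moreover have "has_type F r" using ty[OF b dg] A by blast
        ultimately show "has_type F r \<and> (bij_betw L (internal F) {1..?n} \<and> (\<forall>v. v \<notin> internal F \<longrightarrow> L v = 0))
          \<and> proper_colouring F L k c \<and> (\<forall>v\<in>internal F. L v \<in> S (deg F v)) \<and> (\<forall>v\<in>internal F. L v = 1 \<longrightarrow> hd v = 0)"
          using A by blast
      qed
    qed
    show ?thesis
    proof (rule set_eqI)
      fix y :: "ptree list \<times> (nat list \<Rightarrow> nat) \<times> (nat list \<Rightarrow> colour)"
      obtain F L c where "y = (F, L, c)" by (cases y)
      then show "y \<in> CFS1 r k S \<longleftrightarrow> y \<in> QS {1..?n} D (r 0) k (\<lambda>i. i = 0)" using key by simp
    qed
  qed
  have "card (CFS1 r k S) = (\<Prod>x\<in>{1..?n}. D x) * Pk (r 0) k (Suc (?n - 1))" using EQ M by simp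
  also have "\<dots> = (\<Prod>d\<in>?I. d ^ r d) * (\<Prod>i = 1..?n - 1. r 0 + i * (1 + k))"
    unfolding prodD Pk_def by simp
  finally show ?thesis .
qed


end
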